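(* Let $H$, $J$, $A$ and the Dirac operator $D=D_0+D_1+D_R$ be as in the context, and suppose $\alpha_{13}=\alpha_{14}=0$ and $\delta_{ij}=0$ for all $i\in\{1,2\}$, $j\in\{2,3,4\}$. Then the Hodge property $\mathcal{C}\ell_D(A)'=\mathcal{C}\ell_D(A)^\circ$ holds if and only if $\delta_{21}\neq 0$, $(\alpha_{23},\alpha_{24})\neq(0,0)$, and the matrix $\beta=\begin{bmatrix}\beta_{13}&\beta_{14}\\ \beta_{23}&\beta_{24}\end{bmatrix}$ has no zero row.
   Context: Let $H=M_4(\mathbb{C})\oplus M_4(\mathbb{C})$, with elements written as pairs $(v,w)$ and inner product $\langle (v,w),(v',w')\rangle=\mathrm{Tr}(v^*v')+\mathrm{Tr}(w^*w')$. Let $J$ be the antilinear isometry $J(v,w)=(w^*,v^* )$. Identify $\mathrm{End}_{\mathbb{C}}(H)$ with $M_4(\mathbb{C})\otimes M_2(\mathbb{C})\otimes M_4(\mathbb{C})$ via $\big(x\otimes\begin{bmatrix}a&b\\c&d\end{bmatrix}\otimes y\big)(v,w)=\big(x(av+bw)y^t,\ x(cv+dw)y^t\big)$. Here $e_{ij}$ denotes the matrix unit with $1$ in position $(i,j)$ (size clear from context) and $1$ the identity matrix. Let $A\cong\mathbb{C}\oplus\mathbb{H}\oplus M_3(\mathbb{C})$ be the real $*$-algebra of operators $\mathrm{diag}(\lambda,\bar\lambda,q)\otimes e_{11}\otimes 1+\mathrm{diag}(\lambda,m)\otimes e_{22}\otimes 1$, where $\lambda\in\mathbb{C}$, $q$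 is a quaternion viewed as a $2\times 2$ complex matrix $\begin{bmatrix}z&w\\-\bar w&\bar z\end{bmatrix}$, $m\in M_3(\mathbb{C})$, and $\mathrm{diag}$ denotes block-diagonal $4\times4$ matrices. Fix complex parameters $\alpha_{ij},\beta_{ij}$ ($i\in\{1,2\}$, $j\in\{3,4\}$), $\delta_{12},\delta_{13},\delta_{14},\delta_{21},\delta_{22},\delta_{23},\delta_{24}$ and $\Upsilon_R$. Put $\alpha=\begin{bmatrix}\alpha_{13}&\alpha_{14}\\ \alpha_{23}&\alpha_{24}\end{bmatrix}$, $\beta=\begin{bmatrix}\beta_{13}&\beta_{14}\\ \beta_{23}&\beta_{24}\end{bmatrix}$, $X_\alpha=\begin{bmatrix}0&\alpha\\ \alpha^*&0\end{bmatrix}\in M_4(\mathbb{C})$ (in $2\times2$ blocks), $X_\beta$ likewise, and $Y\in M_4(\mathbb{C})$ the matrix with first row $(0,\delta_{12},\delta_{13},\delta_{14})$, second row $(\delta_{21},\delta_{22},\delta_{23},\delta_{24})$ and zero third and fourth rows. Define $D_0=X_\alpha\otimes e_{11}\otimes e_{11}+X_\beta\otimes e_{11}\otimes(1-e_{11})+Y\otimes e_{12}\otimes e_{11}+Y^*\otimes e_{21}\otimes e_{11}$, $D_1=JD_0J^{-1}$, $D_R=e_{11}\otimes(\Upsilon_R e_{21}+\overline{\Upsilon}_R e_{12})\otimes e_{11}$, and $D=D_0+D_1+D_R$. For $\xi\in\mathrm{End}_{\mathbb{C}}(H)$ set $\xi^\circ=J\xi^*J^{-1}$, and for a subset $S$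 set $S^\circ=\{\xi^\circ:\xi\in S\}$ and $S'=\{\xi\in\mathrm{End}_{\mathbb{C}}(H): [\xi,\eta]=0\ \forall\eta\in S\}$. $\mathcal{C}\ell_D(A)$ is the complex $*$-subalgebra of $\mathrm{End}_{\mathbb{C}}(H)$ generated by $A$ and the operators $a[D,b]$, $a,b\in A$. The Hodge property means $\mathcal{C}\ell_D(A)'=\mathcal{C}\ell_D(A)^\circ$. *)

theory Defs
  imports "HOL-Analysis.Analysis"
begin

(* 
  Conventions.  Indices are 0-based: the paper's index 1 (resp. 2,3,4) is the element
  0 (resp. 1,2,3) of the numeral types 2 and 4.

  The Hilbert space H = M_4(C) + M_4(C) is represented by coordinates: a vector is a
  function on the index type idx = 2 x 4 x 4, where (k,i,j) is the (i,j) entry of the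
  k-th component (k = 0 for v, k = 1 for w).  The matrix units of the two summands form an
  orthonormal basis for the inner product Tr(v^H v') + Tr(w^* w'), which in these
  coordinates is the standard inner product.  Complex-linear endomorphisms of H are
  therefore the matrices  complex^idx^idx  (acting by *v), composition is ** and the
  Hilbert-space adjoint is the conjugate transpose.
 *)

type_synonym idx = "2 \<times> 4 \<times> 4"
type_synonym hvec = "complex ^ idx"
type_synonym op = "complex ^ idx ^ idx"

definition hinner :: "hvec \<Rightarrow> hvec \<Rightarrow> complex" where
  "hinner u u' = (\<Sum>a\<in>UNIV. cnj (u $ a) * u' $ a)"

definition cadj :: "complex ^ 'n ^ 'n \<Rightarrow> complex ^ 'n ^ 'n" where
  "cadj X = (\<chi> i j. cnj (X $ j $ i))"

definition emat :: "'n \<Rightarrow> 'n \<Rightarrow> complex ^ 'n ^ 'n" where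
  "emat p q = (\<chi> i j. if i = p \<and> j = q then 1 else 0)"

definition smat :: "complex \<Rightarrow> complex ^ 'n ^ 'n \<Rightarrow> complex ^ 'n ^ 'n" where
  "smat c X = (\<chi> i j. c * X $ i $ j)"

(* The identification x \<otimes> M \<otimes> y : (v,w) \<mapsto> (x(av+bw)y^t, x(cv+dw)y^t), written in coordinates. *)
definition kron3 :: "complex^4^4 \<Rightarrow> complex^2^2 \<Rightarrow> complex^4^4 \<Rightarrow> op" where
  "kron3 x M y = (\<chi> p q. M $ fst p $ fst q * x $ fst (snd p) $ fst (snd q)
                          * y $ snd (snd p) $ snd (snd q))"

(* The antilinear isometry J(v,w) = (w^H, v^H) (conjugate transposes). *)
definition Jv :: "hvec \<Rightarrow> hvec" where
  "Jv u = (\<chi> p. cnj (u $ (1 - fst p, snd (snd p), fst (snd p))))"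

definition op_of :: "(hvec \<Rightarrow> hvec) \<Rightarrow> op" where
  "op_of f = (\<chi> p q. f (axis q 1) $ p)"

definition Jconj :: "op \<Rightarrow> op" where
  "Jconj X = op_of (\<lambda>u. Jv (X *v (inv Jv u)))"

definition opp :: "op \<Rightarrow> op" where
  "opp X = Jconj (cadj X)"

definition commutant :: "op set \<Rightarrow> op set" where
  "commutant S = {X. \<forall>Y\<in>S. X ** Y = Y ** X}"

inductive_set star_alg_gen :: "op set \<Rightarrow> op set" for S where
  gen: "X \<in> S \<Longrightarrow> X \<in> star_alg_gen S"
| add: "X \<in> star_alg_gen S \<Longrightarrow> Y \<in> star_alg_gen S \<Longrightarrow> X + Y \<in> star_alg_gen S"
| smult: "X \<in> star_alg_gen S \<Longrightarrow> smat c X \<in> star_alg_gen S"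
| mult: "X \<in> star_alg_gen S \<Longrightarrow> Y \<in> star_alg_gen S \<Longrightarrow> X ** Y \<in> star_alg_gen S"
| adj: "X \<in> star_alg_gen S \<Longrightarrow> cadj X \<in> star_alg_gen S"

definition diag1 :: "complex \<Rightarrow> complex \<Rightarrow> complex \<Rightarrow> complex^4^4" where
  "diag1 l z w = (\<chi> i j.
     if i = 0 \<and> j = 0 then l
     else if i = 1 \<and> j = 1 then cnj l
     else if i = 2 \<and> j = 2 then z
     else if i = 2 \<and> j = 3 then w
     else if i = 3 \<and> j = 2 then - cnj w
     else if i = 3 \<and> j = 3 then cnj z
     else 0)"

(* diag(\<lambda>, m): m in M_3(C) is the lower-right 3x3 block (indices 1..3) of an
  arbitrary 4x4 matrix m; ranging over all m gives all of M_3(C). *)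
definition diag2 :: "complex \<Rightarrow> complex^4^4 \<Rightarrow> complex^4^4" where
  "diag2 l m = (\<chi> i j. if i = 0 \<and> j = 0 then l
                        else if i \<noteq> 0 \<and> j \<noteq> 0 then m $ i $ j else 0)"

definition algA :: "op set" where
  "algA = {kron3 (diag1 l z w) (emat 0 0) (mat 1) + kron3 (diag2 l m) (emat 1 1) (mat 1)
           | l z w m. True}"

definition Xmat :: "complex \<Rightarrow> complex \<Rightarrow> complex \<Rightarrow> complex \<Rightarrow> complex^4^4" where
  "Xmat p q r s = (\<chi> i j.
     if i = 0 \<and> j = 2 then p
     else if i = 0 \<and> j = 3 then q
     else if i = 1 \<and> j = 2 then r
     else if i = 1 \<and> j = 3 then s
     else if i = 2 \<and> j = 0 then cnj p
     else if i = 3 \<and> j = 0 then cnj q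
     else if i = 2 \<and> j = 1 then cnj r
     else if i = 3 \<and> j = 1 then cnj s
     else 0)"

definition Ymat :: "complex \<Rightarrow> complex \<Rightarrow> complex \<Rightarrow> complex \<Rightarrow> complex \<Rightarrow> complex \<Rightarrow> complex
                    \<Rightarrow> complex^4^4" where
  "Ymat d12 d13 d14 d21 d22 d23 d24 = (\<chi> i j.
     if i = 0 then (if j = 1 then d12 else if j = 2 then d13 else if j = 3 then d14 else 0)
     else if i = 1 then (if j = 0 then d21 else if j = 1 then d22 else if j = 2 then d23 else d24)
     else 0)"

definition D0 :: "complex^4^4 \<Rightarrow> complex^4^4 \<Rightarrow> complex^4^4 \<Rightarrow> op" where
  "D0 Xa Xb Y = kron3 Xa (emat 0 0) (emat 0 0) + kron3 Xb (emat 0 0) (mat 1 - emat 0 0)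
              + kron3 Y (emat 0 1) (emat 0 0) + kron3 (cadj Y) (emat 1 0) (emat 0 0)"

definition DR :: "complex \<Rightarrow> op" where
  "DR u = kron3 (emat 0 0) (smat u (emat 1 0) + smat (cnj u) (emat 0 1)) (emat 0 0)"

definition Dirac :: "complex^4^4 \<Rightarrow> complex^4^4 \<Rightarrow> complex^4^4 \<Rightarrow> complex \<Rightarrow> op" where
  "Dirac Xa Xb Y u = D0 Xa Xb Y + Jconj (D0 Xa Xb Y) + DR u"

definition ClD :: "op \<Rightarrow> op set" where
  "ClD D = star_alg_gen (algA \<union> {a ** (D ** b - b ** D) | a b. a \<in> algA \<and> b \<in> algA})"

definition hodge :: "op \<Rightarrow> bool" where
  "hodge D \<longleftrightarrow> commutant (ClD D) = opp ` ClD D"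

end

theory Submission
  imports Defs
begin


lemma UNIV4: "(UNIV::4 set) = {0,1,2,3}"
proof (rule set_eqI)
  fix x :: 4
  show "x \<in> UNIV \<longleftrightarrow> x \<in> {0,1,2,3}"
    using exhaust_4[of x] by auto
qed

lemma UNIV2': "(UNIV::2 set) = {0,1}"
proof (rule set_eqI)
  fix x :: 2
  show "x \<in> UNIV \<longleftrightarrow> x \<in> {0,1}"
    using exhaust_2[of x] by auto
qed

lemma sum4: "sum f (UNIV::4 set) = f 0 + f 1 + f 2 + f 3"
  unfolding UNIV4 by (simp add: add.assoc)
lemma sum2: "sum f (UNIV::2 set) = f 0 + f 1"
  unfolding UNIV2' by simp
lemma all4: "(\<forall>x::4. P x) \<longleftrightarrow> P 0 \<and> P 1 \<and> P 2 \<and> P 3"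
proof -
  have "(\<forall>x::4. P x) \<longleftrightarrow> (\<forall>x\<in>{0,1,2,3}. P x)" unfolding UNIV4[symmetric] by simp
  then show ?thesis by simp
qed
lemma all2: "(\<forall>x::2. P x) \<longleftrightarrow> P 0 \<and> P 1"
proof -
  have "(\<forall>x::2. P x) \<longleftrightarrow> (\<forall>x\<in>{0,1}. P x)" unfolding UNIV2'[symmetric] by simp
  then show ?thesis by simp
qed
lemma ex4: "(\<exists>x::4. P x) \<longleftrightarrow> P 0 \<or> P 1 \<or> P 2 \<or> P 3"
proof -
  have "(\<exists>x::4. P x) \<longleftrightarrow> (\<exists>x\<in>{0,1,2,3}. P x)" unfolding UNIV4[symmetric] by simp
  then show ?thesis by simp
qed
lemma ex2: "(\<exists>x::2. P x) \<longleftrightarrow> P 0 \<or> P 1"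
proof -
  have "(\<exists>x::2. P x) \<longleftrightarrow> (\<exists>x\<in>{0,1}. P x)" unfolding UNIV2'[symmetric] by simp
  then show ?thesis by simp
qed

lemma sum_prodU: "sum f (UNIV::('a::finite \<times> 'b::finite) set) = (\<Sum>k\<in>UNIV. \<Sum>i\<in>UNIV. f (k,i))"
  by (subst sum.cartesian_product) simp
lemma sum_idx: "sum f (UNIV::idx set) = (\<Sum>k\<in>UNIV. \<Sum>i\<in>UNIV. \<Sum>j\<in>UNIV. f (k,i,j))"
  by (simp add: sum_prodU)

lemma kron3_apply: "kron3 x M y $ p $ q = M $ fst p $ fst q * x $ fst (snd p) $ fst (snd q)
                          * y $ snd (snd p) $ snd (snd q)"
  by (simp add: kron3_def)

lemma mmult_apply: "(A ** B) $ i $ j = (\<Sum>k\<in>UNIV. A $ i $ k * B $ k $ j)"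
  by (simp add: matrix_matrix_mult_def)


lemma op_eqI: "(\<And>k i j k' i' j'. (X::op) $ (k,i,j) $ (k',i',j') = Y $ (k,i,j) $ (k',i',j')) \<Longrightarrow> X = Y"
  by (simp add: vec_eq_iff)

lemma triple: "(\<Sum>a\<in>A. f a) * (\<Sum>b\<in>B. g b) * (\<Sum>c\<in>C. h c) = (\<Sum>a\<in>A. \<Sum>b\<in>B. \<Sum>c\<in>C. f a * g b * h c)"
  for f g h :: "_ \<Rightarrow> complex"
proof -
  have 1: "(\<Sum>b\<in>B. g b) * (\<Sum>c\<in>C. h c) = (\<Sum>b\<in>B. \<Sum>c\<in>C. g b * h c)" by (rule sum_product)
  have 2: "(\<Sum>a\<in>A. f a) * (\<Sum>b\<in>B. \<Sum>c\<in>C. g b * h c) = (\<Sum>a\<in>A. \<Sum>b\<in>B. f a * (\<Sum>c\<in>C. g b * h c))"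
    by (rule sum_product)
  have 3: "f a * (\<Sum>c\<in>C. g b * h c) = (\<Sum>c\<in>C. f a * g b * h c)" for a b
    by (simp only: sum_distrib_left mult.assoc)
  have "(\<Sum>a\<in>A. f a) * (\<Sum>b\<in>B. g b) * (\<Sum>c\<in>C. h c) = (\<Sum>a\<in>A. f a) * ((\<Sum>b\<in>B. g b) * (\<Sum>c\<in>C. h c))"
    by (rule mult.assoc)
  also have "\<dots> = (\<Sum>a\<in>A. \<Sum>b\<in>B. f a * (\<Sum>c\<in>C. g b * h c))" by (simp only: 1 2)
  also have "\<dots> = (\<Sum>a\<in>A. \<Sum>b\<in>B. \<Sum>c\<in>C. f a * g b * h c)" by (simp only: 3)
  finally show ?thesis .
qed

lemma kron3_mult: "kron3 x M y ** kron3 x' M' y' = kron3 (x ** x') (M ** M') (y ** y')"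
proof (rule op_eqI)
  fix k i j k' i' j'
  have "(kron3 x M y ** kron3 x' M' y') $ (k,i,j) $ (k',i',j') =
     (\<Sum>a\<in>UNIV. \<Sum>b\<in>UNIV. \<Sum>c\<in>UNIV. (M $ k $ a * M' $ a $ k') * (x $ i $ b * x' $ b $ i') * (y $ j $ c * y' $ c $ j'))"
    unfolding mmult_apply sum_idx by (intro sum.cong refl) (simp add: kron3_apply mult_ac)
  also have "\<dots> = kron3 (x ** x') (M ** M') (y ** y') $ (k,i,j) $ (k',i',j')"
    unfolding kron3_apply mmult_apply fst_conv snd_conv triple ..
  finally show "(kron3 x M y ** kron3 x' M' y') $ (k,i,j) $ (k',i',j') = kron3 (x ** x') (M ** M') (y ** y') $ (k,i,j) $ (k',i',j')" .
qed

lemma emat_apply: "emat p q $ i $ j = (if i = p \<and> j = q then 1 else 0)"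
  by (simp add: emat_def)
lemma smat_apply: "smat c X $ i $ j = c * X $ i $ j"
  by (simp add: smat_def)
lemma cadj_apply: "cadj X $ i $ j = cnj (X $ j $ i)"
  by (simp add: cadj_def)
lemma mat1_apply: "(mat 1 :: complex^'n^'n) $ i $ j = (if i = j then 1 else 0)"
  by (simp add: mat_def)

lemma emat_mult: "emat a b ** emat c d = (if b = c then emat a d else 0)"
  by (auto simp: vec_eq_iff mmult_apply emat_apply if_distrib[of "\<lambda>x. x * _"] sum.delta' cong: if_cong)

lemma kron3_add1: "kron3 (x + x') M y = kron3 x M y + kron3 x' M y"
  by (simp add: vec_eq_iff kron3_apply algebra_simps)
lemma kron3_add2: "kron3 x (M + M') y = kron3 x M y + kron3 x M' y"
  by (simp add: vec_eq_iff kron3_apply algebra_simps)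
lemma kron3_add3: "kron3 x M (y + y') = kron3 x M y + kron3 x M y'"
  by (simp add: vec_eq_iff kron3_apply algebra_simps)
lemma kron3_diff1: "kron3 (x - x') M y = kron3 x M y - kron3 x' M y"
  by (simp add: vec_eq_iff kron3_apply algebra_simps)
lemma kron3_diff2: "kron3 x (M - M') y = kron3 x M y - kron3 x M' y"
  by (simp add: vec_eq_iff kron3_apply algebra_simps)
lemma kron3_diff3: "kron3 x M (y - y') = kron3 x M y - kron3 x M y'"
  by (simp add: vec_eq_iff kron3_apply algebra_simps)
lemma kron3_zero1: "kron3 0 M y = 0"
  by (simp add: vec_eq_iff kron3_apply)
lemma kron3_zero2: "kron3 x 0 y = 0"
  by (simp add: vec_eq_iff kron3_apply)
lemma kron3_zero3: "kron3 x M 0 = 0"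
  by (simp add: vec_eq_iff kron3_apply)
lemma kron3_smat1: "kron3 (smat c x) M y = smat c (kron3 x M y)"
  by (simp add: vec_eq_iff kron3_apply smat_apply algebra_simps)
lemma kron3_smat2: "kron3 x (smat c M) y = smat c (kron3 x M y)"
  by (simp add: vec_eq_iff kron3_apply smat_apply algebra_simps)
lemma kron3_smat3: "kron3 x M (smat c y) = smat c (kron3 x M y)"
  by (simp add: vec_eq_iff kron3_apply smat_apply algebra_simps)

lemma smat_add: "smat c (A + B) = smat c A + smat c B"
  by (simp add: vec_eq_iff smat_apply algebra_simps)
lemma smat_diff: "smat c (A - B) = smat c A - smat c B"
  by (simp add: vec_eq_iff smat_apply algebra_simps)
lemma smat_smat: "smat c (smat d A) = smat (c * d) A"
  by (simp add: vec_eq_iff smat_apply algebra_simps)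
lemma smat_one: "smat 1 A = A"
  by (simp add: vec_eq_iff smat_apply)
lemma smat_zero: "smat 0 A = 0"
  by (simp add: vec_eq_iff smat_apply)
lemma smat_zero2: "smat c 0 = 0"
  by (simp add: vec_eq_iff smat_apply)
lemma smat_addc: "smat (c + d) A = smat c A + smat d A"
  by (simp add: vec_eq_iff smat_apply algebra_simps)
lemma smat_mult1: "smat c A ** B = smat c (A ** B)"
  by (simp add: vec_eq_iff smat_apply mmult_apply sum_distrib_left algebra_simps)
lemma smat_mult2: "A ** smat c B = smat c (A ** B)"
  by (simp add: vec_eq_iff smat_apply mmult_apply sum_distrib_left algebra_simps)

lemma cadj_mult: "cadj (A ** B) = cadj B ** cadj A"
  by (simp add: vec_eq_iff cadj_apply mmult_apply mult.commute)
lemma cadj_add: "cadj (A + B) = cadj A + cadj B"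
  by (simp add: vec_eq_iff cadj_apply)
lemma cadj_diff: "cadj (A - B) = cadj A - cadj B"
  by (simp add: vec_eq_iff cadj_apply)
lemma cadj_smat: "cadj (smat c A) = smat (cnj c) (cadj A)"
  by (simp add: vec_eq_iff cadj_apply smat_apply)
lemma cadj_cadj: "cadj (cadj A) = A"
  by (simp add: vec_eq_iff cadj_apply)
lemma cadj_zero: "cadj 0 = 0"
  by (simp add: vec_eq_iff cadj_apply)
lemma cadj_emat: "cadj (emat p q) = emat q p"
  by (auto simp add: vec_eq_iff cadj_apply emat_apply)
lemma cadj_mat1: "cadj (mat 1) = mat 1"
  by (auto simp add: vec_eq_iff cadj_apply mat1_apply)
lemma cadj_kron3: "cadj (kron3 x M y) = kron3 (cadj x) (cadj M) (cadj y)"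
  by (simp add: vec_eq_iff cadj_apply kron3_apply)

definition sw :: "idx \<Rightarrow> idx" where
  "sw p = (1 - fst p, snd (snd p), fst (snd p))"

lemma sw_sw: "sw (sw p) = p"
  by (cases p) (simp add: sw_def)

lemma Jv_apply: "Jv u $ p = cnj (u $ sw p)"
  by (simp add: Jv_def sw_def)

lemma Jv_Jv: "Jv (Jv u) = u"
  by (simp add: vec_eq_iff Jv_apply sw_sw)

lemma inv_Jv: "inv Jv = Jv"
proof -
  show ?thesis by (intro inv_equality) (simp_all add: Jv_Jv)
qed

lemma Jconj_apply: "Jconj X $ p $ q = cnj (X $ sw p $ sw q)"
proof -
  have "(X *v Jv (axis q 1)) $ sw p = (\<Sum>r\<in>UNIV. X $ sw p $ r * (if r = sw q then 1 else 0))"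
    unfolding matrix_vector_mult_def by (auto intro!: sum.cong simp add: Jv_apply axis_def sw_sw)
  also have "\<dots> = X $ sw p $ sw q"
    by (simp add: if_distrib[of "\<lambda>x. _ * x"] sum.delta' cong: if_cong)
  finally show ?thesis
    by (simp add: Jconj_def op_of_def inv_Jv Jv_apply)
qed

lemma opp_apply: "opp X $ p $ q = X $ sw q $ sw p"
  by (simp add: opp_def Jconj_apply cadj_apply)

definition cmat :: "complex^'n^'n \<Rightarrow> complex^'n^'n" where
  "cmat x = (\<chi> i j. cnj (x $ i $ j))"
definition flipc :: "complex^2^2 \<Rightarrow> complex^2^2" where
  "flipc M = (\<chi> k k'. cnj (M $ (1 - k) $ (1 - k')))"

lemma Jconj_kron3: "Jconj (kron3 x M y) = kron3 (cmat y) (flipc M) (cmat x)"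
  by (simp add: vec_eq_iff Jconj_apply kron3_apply sw_def cmat_def flipc_def mult_ac)

lemma Jconj_add: "Jconj (A + B) = Jconj A + Jconj B"
  by (simp add: vec_eq_iff Jconj_apply)

lemma opp_opp: "opp (opp X) = X"
  by (simp add: vec_eq_iff opp_apply sw_sw)


definition blk :: "('i::finite \<Rightarrow> nat) \<Rightarrow> ('i \<Rightarrow> nat) \<Rightarrow> ('i \<Rightarrow> nat) \<Rightarrow> (complex^'i^'i) set" where
  "blk bl ps cp = {M. \<exists>F. \<forall>p q. M $ p $ q = (if bl p = bl q \<and> cp p = cp q then F (bl p) (ps p) (ps q) else 0)}"

definition regular :: "('i::finite \<Rightarrow> nat) \<Rightarrow> ('i \<Rightarrow> nat) \<Rightarrow> ('i \<Rightarrow> nat) \<Rightarrow> ('i \<Rightarrow> 'i \<Rightarrow> 'i) \<Rightarrow> bool" where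
  "regular bl ps cp pt \<longleftrightarrow> (\<forall>p q. bl p = bl q \<and> ps p = ps q \<and> cp p = cp q \<longrightarrow> p = q) \<and>
     (\<forall>p c. bl p = bl c \<longrightarrow> bl (pt p c) = bl p \<and> ps (pt p c) = ps p \<and> cp (pt p c) = cp c)"

lemma regular_swap: "regular bl ps cp pt \<Longrightarrow> regular bl cp ps (\<lambda>p c. pt c p)"
  unfolding regular_def by metis

lemma regularD1: "regular bl ps cp pt \<Longrightarrow> bl p = bl q \<Longrightarrow> ps p = ps q \<Longrightarrow> cp p = cp q \<Longrightarrow> p = q"
  unfolding regular_def by blast
lemma regularD2: "regular bl ps cp pt \<Longrightarrow> bl p = bl c \<Longrightarrow> bl (pt p c) = bl p \<and> ps (pt p c) = ps p \<and> cp (pt p c) = cp c"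
  unfolding regular_def by blast

lemma blkI: "(\<And>p q. M $ p $ q = (if bl p = bl q \<and> cp p = cp q then F (bl p) (ps p) (ps q) else 0)) \<Longrightarrow> M \<in> blk bl ps cp"
  unfolding blk_def by blast

lemma blkE: assumes "M \<in> blk bl ps cp"
  obtains F where "\<And>p q. M $ p $ q = (if bl p = bl q \<and> cp p = cp q then F (bl p) (ps p) (ps q) else 0)"
  using assms unfolding blk_def by blast

lemma blk_add: "M \<in> blk bl ps cp \<Longrightarrow> N \<in> blk bl ps cp \<Longrightarrow> M + N \<in> blk bl ps cp"
proof -
  assume M: "M \<in> blk bl ps cp" and N: "N \<in> blk bl ps cp"
  obtain F where F: "\<And>p q. M $ p $ q = (if bl p = bl q \<and> cp p = cp q then F (bl p) (ps p) (ps q) else 0)"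
    using M by (rule blkE) blast
  obtain G where G: "\<And>p q. N $ p $ q = (if bl p = bl q \<and> cp p = cp q then G (bl p) (ps p) (ps q) else 0)"
    using N by (rule blkE) blast
  show ?thesis by (rule blkI[where F="\<lambda>b x y. F b x y + G b x y"]) (simp add: F G)
qed

lemma blk_smat: "M \<in> blk bl ps cp \<Longrightarrow> smat c M \<in> blk bl ps cp"
proof -
  assume M: "M \<in> blk bl ps cp"
  obtain F where F: "\<And>p q. M $ p $ q = (if bl p = bl q \<and> cp p = cp q then F (bl p) (ps p) (ps q) else 0)"
    using M by (rule blkE) blast
  show ?thesis by (rule blkI[where F="\<lambda>b x y. c * F b x y"]) (simp add: F smat_apply)
qed

lemma blk_cadj: "M \<in> blk bl ps cp \<Longrightarrow> cadj M \<in> blk bl ps cp"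
proof -
  assume M: "M \<in> blk bl ps cp"
  obtain F where F: "\<And>p q. M $ p $ q = (if bl p = bl q \<and> cp p = cp q then F (bl p) (ps p) (ps q) else 0)"
    using M by (rule blkE) blast
  show ?thesis by (rule blkI[where F="\<lambda>b x y. cnj (F b y x)"]) (auto simp add: F cadj_apply)
qed

lemma sum_single: assumes "\<And>r. r \<noteq> r0 \<Longrightarrow> f r = 0" shows "sum f (UNIV::'a::finite set) = f r0"
proof -
  have "sum f UNIV = sum f {r0}" by (rule sum.mono_neutral_right) (auto simp: assms)
  then show ?thesis by simp
qed

lemma sum_zero': "(\<And>r. f r = 0) \<Longrightarrow> sum f A = 0"
  by simp

lemma blk_mult:
  assumes reg: "regular bl ps cp pt" and M: "M \<in> blk bl ps cp" and N: "N \<in> blk bl ps cp"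
  shows "M ** N \<in> blk bl ps cp"
proof -
  obtain F where F: "\<And>p q. M $ p $ q = (if bl p = bl q \<and> cp p = cp q then F (bl p) (ps p) (ps q) else 0)"
    using M by (rule blkE) blast
  obtain G where G: "\<And>p q. N $ p $ q = (if bl p = bl q \<and> cp p = cp q then G (bl p) (ps p) (ps q) else 0)"
    using N by (rule blkE) blast
  define H where "H b x y = (\<Sum>t\<in>ps ` {r. bl r = b}. F b x t * G b t y)" for b x y
  show ?thesis
  proof (rule blkI[where F=H])
    fix p q
    show "(M ** N) $ p $ q = (if bl p = bl q \<and> cp p = cp q then H (bl p) (ps p) (ps q) else 0)"
    proof (cases "bl p = bl q \<and> cp p = cp q")
      case True
      let ?R = "{r. bl r = bl p \<and> cp r = cp p}"
      have "(M ** N) $ p $ q = (\<Sum>r\<in>UNIV. M $ p $ r * N $ r $ q)" by (rule mmult_apply)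
      also have "\<dots> = (\<Sum>r\<in>?R. M $ p $ r * N $ r $ q)"
        by (rule sum.mono_neutral_right) (auto simp: F)
      also have "\<dots> = (\<Sum>r\<in>?R. F (bl p) (ps p) (ps r) * G (bl p) (ps r) (ps q))"
        by (rule sum.cong) (use True in \<open>auto simp: F G\<close>)
      also have "\<dots> = (\<Sum>t\<in>ps ` ?R. F (bl p) (ps p) t * G (bl p) t (ps q))"
      proof (rule sum.reindex_cong[symmetric, where l=ps])
        show "inj_on ps ?R" by (rule inj_onI) (rule regularD1[OF reg]; simp)
      qed simp_all
      also have "ps ` ?R = ps ` {r. bl r = bl p}"
      proof
        show "ps ` ?R \<subseteq> ps ` {r. bl r = bl p}" by auto
        show "ps ` {r. bl r = bl p} \<subseteq> ps ` ?R"
        proof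
          fix t assume "t \<in> ps ` {r. bl r = bl p}"
          then obtain r where r: "bl r = bl p" "t = ps r" by auto
          then have "pt r p \<in> ?R" "ps (pt r p) = t" using regularD2[OF reg, of r p] by auto
          then show "t \<in> ps ` ?R" by (metis image_eqI)
        qed
      qed
      finally show ?thesis using True by (simp add: H_def)
    next
      case False
      have "(M ** N) $ p $ q = (\<Sum>r\<in>UNIV. M $ p $ r * N $ r $ q)" by (rule mmult_apply)
      also have "\<dots> = 0" by (rule sum_zero') (use False in \<open>auto simp: F G\<close>)
      finally show ?thesis unfolding if_not_P[OF False] .
    qed
  qed
qed

lemma blk_gen:
  fixes bl :: "idx \<Rightarrow> nat"
  assumes reg: "regular bl ps cp pt" and S: "S \<subseteq> blk bl ps cp"
  shows "star_alg_gen S \<subseteq> blk bl ps cp"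
proof
  fix X assume "X \<in> star_alg_gen S"
  then show "X \<in> blk bl ps cp"
    by (induction rule: star_alg_gen.induct)
       (use S in \<open>auto intro: blk_add blk_smat blk_cadj blk_mult[OF reg]\<close>)
qed

lemma blk_comm:
  assumes reg: "regular bl ps cp pt" and X: "X \<in> blk bl cp ps" and M: "M \<in> blk bl ps cp"
  shows "X ** M = M ** X"
proof -
  obtain F where F: "\<And>p q. M $ p $ q = (if bl p = bl q \<and> cp p = cp q then F (bl p) (ps p) (ps q) else 0)"
    using M by (rule blkE) blast
  obtain G where G: "\<And>p q. X $ p $ q = (if bl p = bl q \<and> ps p = ps q then G (bl p) (cp p) (cp q) else 0)"
    using X by (rule blkE) blast
  show ?thesis
  proof (rule iffD2[OF vec_eq_iff], intro allI iffD2[OF vec_eq_iff])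
    fix p q
    show "(X ** M) $ p $ q = (M ** X) $ p $ q"
    proof (cases "bl p = bl q")
      case True
      have a: "(X ** M) $ p $ q = X $ p $ pt p q * M $ pt p q $ q"
        unfolding mmult_apply
        by (rule sum_single) (use True regularD1[OF reg] regularD2[OF reg, of p q] in \<open>auto simp: F G\<close>)
      have b: "(M ** X) $ p $ q = M $ p $ pt q p * X $ pt q p $ q"
        unfolding mmult_apply
        by (rule sum_single) (use True regularD1[OF reg] regularD2[OF reg, of q p] in \<open>auto simp: F G\<close>)
      show ?thesis unfolding a b using True regularD2[OF reg, of p q] regularD2[OF reg, of q p]
        by (simp add: F G)
    next
      case False
      have "(X ** M) $ p $ q = 0" unfolding mmult_apply by (rule sum_zero') (use False in \<open>auto simp: F G\<close>)
      moreover have "(M ** X) $ p $ q = 0" unfolding mmult_apply by (rule sum_zero') (use False in \<open>auto simp: F G\<close>)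
      ultimately show ?thesis by simp
    qed
  qed
qed

definition unit_op :: "('i::finite \<Rightarrow> nat) \<Rightarrow> ('i \<Rightarrow> nat) \<Rightarrow> ('i \<Rightarrow> nat) \<Rightarrow> nat \<Rightarrow> nat \<Rightarrow> nat \<Rightarrow> complex^'i^'i" where
  "unit_op bl ps cp b x y = (\<chi> p q. if bl p = b \<and> bl q = b \<and> cp p = cp q \<and> ps p = x \<and> ps q = y then 1 else 0)"

lemma unit_op_blk: "unit_op bl ps cp b x y \<in> blk bl ps cp"
  by (rule blkI[where F="\<lambda>b' x' y'. if b' = b \<and> x' = x \<and> y' = y then 1 else 0"]) (auto simp: unit_op_def)

lemma comm_blk:
  fixes bl :: "'i::finite \<Rightarrow> nat" and X :: "complex^'i^'i"
  assumes reg: "regular bl ps cp pt" and X: "\<And>M. M \<in> blk bl ps cp \<Longrightarrow> X ** M = M ** X"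
  shows "X \<in> blk bl cp ps"
proof -
  have XU: "X ** unit_op bl ps cp b x y = unit_op bl ps cp b x y ** X" for b x y
    using X unit_op_blk by blast
  have L: "(X ** unit_op bl ps cp b x y) $ p $ q = (if bl q = b \<and> ps q = y then X $ p $ pt q' q else 0)"
    if "bl q' = b" "ps q' = x" for b x y and p q q' :: 'i
  proof (cases "bl q = b \<and> ps q = y")
    case True
    have "(X ** unit_op bl ps cp b x y) $ p $ q = X $ p $ pt q' q * unit_op bl ps cp b x y $ pt q' q $ q"
      unfolding mmult_apply
      by (rule sum_single) (use True that regularD1[OF reg] regularD2[OF reg, of q' q] in \<open>auto simp: unit_op_def\<close>)
    then show ?thesis using True that regularD2[OF reg, of q' q] by (simp add: unit_op_def)
  next
    case False
    show ?thesis unfolding mmult_apply by (simp add: sum_zero' unit_op_def False) (use False in auto)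
  qed
  have R: "(unit_op bl ps cp b x y ** X) $ p $ q = (if bl p = b \<and> ps p = x then X $ pt q' p $ q else 0)"
    if "bl q' = b" "ps q' = y" for b x y and p q q' :: 'i
  proof (cases "bl p = b \<and> ps p = x")
    case True
    have "(unit_op bl ps cp b x y ** X) $ p $ q = unit_op bl ps cp b x y $ p $ pt q' p * X $ pt q' p $ q"
      unfolding mmult_apply
      by (rule sum_single) (use True that regularD1[OF reg] regularD2[OF reg, of q' p] in \<open>auto simp: unit_op_def\<close>)
    then show ?thesis using True that regularD2[OF reg, of q' p] by (simp add: unit_op_def)
  next
    case False
    show ?thesis unfolding mmult_apply by (simp add: sum_zero' unit_op_def False) (use False in auto)
  qed
  define y0 where "y0 b = ps (SOME r. bl r = b)" for b
  define P0 where "P0 b c = (SOME r. bl r = b \<and> ps r = y0 b \<and> cp r = c)" for b c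
  define G where "G b c c' = X $ P0 b c $ P0 b c'" for b c c'
  have P0: "bl (P0 (bl p) (cp p)) = bl p \<and> ps (P0 (bl p) (cp p)) = y0 (bl p) \<and> cp (P0 (bl p) (cp p)) = cp p" for p
  proof -
    let ?s = "SOME r. bl r = bl p"
    have s: "bl ?s = bl p" by (rule someI) simp
    have "bl (pt ?s p) = bl p \<and> ps (pt ?s p) = y0 (bl p) \<and> cp (pt ?s p) = cp p"
      using regularD2[OF reg, of ?s p] s by (simp add: y0_def)
    then show ?thesis unfolding P0_def by (rule someI)
  qed
  show ?thesis
  proof (rule blkI[where F=G])
    fix p q
    show "X $ p $ q = (if bl p = bl q \<and> ps p = ps q then G (bl p) (cp p) (cp q) else 0)"
    proof (cases "bl p = bl q \<and> ps p = ps q")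
      case False
      have qq: "pt q q = q" using regularD1[OF reg, of "pt q q" q] regularD2[OF reg, of q q] by simp
      have "X $ p $ q = (X ** unit_op bl ps cp (bl q) (ps q) (ps q)) $ p $ q"
        using L[where b="bl q" and x="ps q" and y="ps q" and p=p and q=q and q'=q] qq by simp
      also have "\<dots> = (unit_op bl ps cp (bl q) (ps q) (ps q) ** X) $ p $ q" by (simp add: XU)
      also have "\<dots> = 0" using R[where b="bl q" and x="ps q" and y="ps q" and p=p and q=q and q'=q] False by auto
      finally show ?thesis unfolding if_not_P[OF False] .
    next
      case True
      let ?b = "bl p" and ?x = "ps p" and ?y = "y0 (bl p)"
      let ?q' = "P0 (bl p) (cp q)" and ?p' = "P0 (bl p) (cp p)"
      have q': "bl ?q' = bl p" "ps ?q' = ?y" "cp ?q' = cp q" using P0[of q] True by auto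
      have p': "bl ?p' = bl p" "ps ?p' = ?y" "cp ?p' = cp p" using P0[of p] by auto
      have e1: "pt q ?q' = q" using regularD2[OF reg, of q ?q'] q' True regularD1[OF reg, of "pt q ?q'" q] by auto
      have e2: "pt ?q' p = ?p'" using regularD2[OF reg, of ?q' p] p' q' regularD1[OF reg, of "pt ?q' p" ?p'] by auto
      have "X $ p $ q = (X ** unit_op bl ps cp ?b ?x ?y) $ p $ ?q'"
        using L[where b="?b" and x="?x" and y="?y" and p=p and q="?q'" and q'=q] q' True e1 by simp
      also have "\<dots> = (unit_op bl ps cp ?b ?x ?y ** X) $ p $ ?q'" by (simp add: XU)
      also have "\<dots> = X $ ?p' $ ?q'"
        using R[where b="?b" and x="?x" and y="?y" and p=p and q="?q'" and q'="?q'"] q' e2 by simp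
      finally show ?thesis using True by (simp add: G_def)
    qed
  qed
qed

lemma commutant_blk:
  fixes bl :: "idx \<Rightarrow> nat"
  assumes reg: "regular bl ps cp pt"
  shows "commutant (blk bl ps cp) = blk bl cp ps"
proof
  show "commutant (blk bl ps cp) \<subseteq> blk bl cp ps" using comm_blk[OF reg] unfolding commutant_def by blast
  show "blk bl cp ps \<subseteq> commutant (blk bl ps cp)"
    unfolding commutant_def using blk_comm[OF reg] by blast
qed

lemma opp_blk: fixes bl :: "idx \<Rightarrow> nat" shows "M \<in> blk bl ps cp \<Longrightarrow> opp M \<in> blk (bl \<circ> sw) (ps \<circ> sw) (cp \<circ> sw)"
proof -
  assume M: "M \<in> blk bl ps cp"
  obtain F where F: "\<And>p q. M $ p $ q = (if bl p = bl q \<and> cp p = cp q then F (bl p) (ps p) (ps q) else 0)"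
    using M by (rule blkE) blast
  show ?thesis by (rule blkI[where F="\<lambda>b x y. F b y x"]) (auto simp: opp_apply F)
qed

lemma opp_image_blk: fixes bl :: "idx \<Rightarrow> nat" shows "opp ` blk bl ps cp = blk (bl \<circ> sw) (ps \<circ> sw) (cp \<circ> sw)"
proof
  show "opp ` blk bl ps cp \<subseteq> blk (bl \<circ> sw) (ps \<circ> sw) (cp \<circ> sw)" using opp_blk by blast
  show "blk (bl \<circ> sw) (ps \<circ> sw) (cp \<circ> sw) \<subseteq> opp ` blk bl ps cp"
  proof
    fix N assume "N \<in> blk (bl \<circ> sw) (ps \<circ> sw) (cp \<circ> sw)"
    then have "opp N \<in> blk (bl \<circ> sw \<circ> sw) (ps \<circ> sw \<circ> sw) (cp \<circ> sw \<circ> sw)" by (rule opp_blk)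
    moreover have "f \<circ> sw \<circ> sw = f" for f :: "idx \<Rightarrow> nat" by (simp add: fun_eq_iff sw_sw)
    ultimately have "opp N \<in> blk bl ps cp" by simp
    then show "N \<in> opp ` blk bl ps cp" by (metis image_eqI opp_opp)
  qed
qed

lemma blk_relabel:
  assumes "\<And>p q. bl' p = bl' q \<longleftrightarrow> bl p = bl q"
  shows "blk bl' ps cp = blk bl ps cp"
proof -
  have *: "M \<in> blk b2 ps cp" if M1: "M \<in> blk b1 ps cp" and eq: "\<And>p q. b1 p = b1 q \<longleftrightarrow> b2 p = b2 q" for M b1 b2
  proof -
    obtain F where F: "\<And>p q. M $ p $ q = (if b1 p = b1 q \<and> cp p = cp q then F (b1 p) (ps p) (ps q) else 0)"
      using M1 by (rule blkE) blast
    show ?thesis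
    proof (rule blkI[where F="\<lambda>b x y. F (b1 (SOME p. b2 p = b)) x y"])
      fix p q
      have "b2 (SOME p'. b2 p' = b2 p) = b2 p" by (rule someI) simp
      then have s: "b1 (SOME p'. b2 p' = b2 p) = b1 p" using eq by blast
      show "M $ p $ q = (if b2 p = b2 q \<and> cp p = cp q then F (b1 (SOME p'. b2 p' = b2 p)) (ps p) (ps q) else 0)"
      proof (cases "b2 p = b2 q \<and> cp p = cp q")
        case True
        then have "b1 p = b1 q" using eq by blast
        then show ?thesis using F[of p q] True unfolding s by simp
      next
        case False
        then have n: "\<not> (b1 p = b1 q \<and> cp p = cp q)" using eq by blast
        show ?thesis using F[of p q] unfolding if_not_P[OF False] if_not_P[OF n] .
      qed
    qed
  qed
  show ?thesis using *[of _ bl bl'] *[of _ bl' bl] assms by blast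
qed

lemma blk_criterion:
  assumes reg: "regular bl ps cp pt"
    and rf1: "\<And>p. bl (rf p) = bl p" and rf2: "\<And>p q. bl p = bl q \<Longrightarrow> rf p = rf q"
    and M: "\<And>p q. M $ p $ q = (if bl p = bl q \<and> cp p = cp q then M $ pt p (rf p) $ pt q (rf p) else 0)"
  shows "M \<in> blk bl ps cp"
proof -
  define a where "a b x = (SOME p. bl p = b \<and> ps p = x)" for b x
  define r0 where "r0 b = rf (SOME p. bl p = b)" for b
  have a: "bl (a (bl p) (ps p)) = bl p \<and> ps (a (bl p) (ps p)) = ps p" for p
    unfolding a_def by (rule someI) simp
  have r0: "r0 (bl p) = rf p" for p
  proof -
    have "bl (SOME p'. bl p' = bl p) = bl p" by (rule someI) simp
    then show ?thesis unfolding r0_def by (rule rf2)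
  qed
  have key: "pt (a (bl p) (ps p)) (r0 (bl p)) = pt p (rf p)" for p
  proof -
    have "bl (a (bl p) (ps p)) = bl (r0 (bl p))" using a[of p] r0[of p] rf1[of p] by simp
    then have 1: "bl (pt (a (bl p) (ps p)) (r0 (bl p))) = bl p \<and> ps (pt (a (bl p) (ps p)) (r0 (bl p))) = ps p
        \<and> cp (pt (a (bl p) (ps p)) (r0 (bl p))) = cp (rf p)"
      using regularD2[OF reg, of "a (bl p) (ps p)" "r0 (bl p)"] a[of p] r0[of p] by simp
    have 2: "bl (pt p (rf p)) = bl p \<and> ps (pt p (rf p)) = ps p \<and> cp (pt p (rf p)) = cp (rf p)"
      using regularD2[OF reg, of p "rf p"] rf1[of p] by simp
    show ?thesis using 1 2 regularD1[OF reg] by metis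
  qed
  show ?thesis
  proof (rule blkI[where F="\<lambda>b x y. M $ pt (a b x) (r0 b) $ pt (a b y) (r0 b)"])
    fix p q
    show "M $ p $ q = (if bl p = bl q \<and> cp p = cp q then M $ pt (a (bl p) (ps p)) (r0 (bl p)) $ pt (a (bl p) (ps q)) (r0 (bl p)) else 0)"
    proof (cases "bl p = bl q \<and> cp p = cp q")
      case True
      then have e: "bl q = bl p" and rfq: "rf q = rf p" using rf2[of p q] by simp_all
      have k2: "pt (a (bl p) (ps q)) (r0 (bl p)) = pt q (rf p)" using key[of q] unfolding e rfq .
      have "M $ p $ q = M $ pt p (rf p) $ pt q (rf p)" using M[of p q] True by simp
      also have "\<dots> = M $ pt (a (bl p) (ps p)) (r0 (bl p)) $ pt (a (bl p) (ps q)) (r0 (bl p))"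
        unfolding key[of p] k2 ..
      finally show ?thesis using True by simp
    next
      case False then show ?thesis using M[of p q] unfolding if_not_P[OF False] by simp
    qed
  qed
qed

lemma blk_criterion':
  assumes reg: "regular bl ps cp pt"
    and rf1: "\<And>p. bl (rf p) = bl p" and rf2: "\<And>p q. bl p = bl q \<Longrightarrow> rf p = rf q"
    and M: "\<forall>p q. M $ p $ q = (if bl p = bl q \<and> cp p = cp q then M $ pt p (rf p) $ pt q (rf p) else 0)"
  shows "M \<in> blk bl ps cp"
  using blk_criterion[OF reg rf1 rf2] M by blast

lemma sum_single_set: "finite A \<Longrightarrow> a \<in> A \<Longrightarrow> (\<And>x. x \<in> A \<Longrightarrow> x \<noteq> a \<Longrightarrow> f x = 0) \<Longrightarrow> sum f A = f a"
  by (rule sum.mono_neutral_right[where S="{a}", simplified]) auto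

lemma blk_decomp:
  assumes M: "M \<in> blk bl ps cp" and fB: "finite Bs" and fX: "finite Xs"
    and B: "\<And>p. bl p \<in> Bs" and X: "\<And>p. ps p \<in> Xs"
  obtains F where "M = (\<Sum>b\<in>Bs. \<Sum>x\<in>Xs. \<Sum>y\<in>Xs. smat (F b x y) (unit_op bl ps cp b x y))"
proof -
  obtain F where F: "\<And>p q. M $ p $ q = (if bl p = bl q \<and> cp p = cp q then F (bl p) (ps p) (ps q) else 0)"
    using M by (rule blkE) blast
  have "M = (\<Sum>b\<in>Bs. \<Sum>x\<in>Xs. \<Sum>y\<in>Xs. smat (F b x y) (unit_op bl ps cp b x y))"
  proof (rule iffD2[OF vec_eq_iff], intro allI iffD2[OF vec_eq_iff])
    fix p q
    let ?u = "\<lambda>b x y. smat (F b x y) (unit_op bl ps cp b x y) $ p $ q"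
    have u: "?u b x y = (if bl p = b \<and> bl q = b \<and> cp p = cp q \<and> ps p = x \<and> ps q = y then F b x y else 0)" for b x y
      by (simp add: smat_apply unit_op_def)
    have "(\<Sum>b\<in>Bs. \<Sum>x\<in>Xs. \<Sum>y\<in>Xs. smat (F b x y) (unit_op bl ps cp b x y)) $ p $ q
        = (\<Sum>b\<in>Bs. \<Sum>x\<in>Xs. \<Sum>y\<in>Xs. ?u b x y)"
      by (simp add: sum_component)
    also have "\<dots> = ?u (bl p) (ps p) (ps q)"
    proof -
      have "(\<Sum>y\<in>Xs. ?u b x y) = ?u b x (ps q)" for b x
        by (rule sum_single_set[OF fX X]) (auto simp: u)
      moreover have "(\<Sum>x\<in>Xs. ?u b x (ps q)) = ?u b (ps p) (ps q)" for b
        by (rule sum_single_set[OF fX X]) (auto simp: u)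
      moreover have "(\<Sum>b\<in>Bs. ?u b (ps p) (ps q)) = ?u (bl p) (ps p) (ps q)"
        by (rule sum_single_set[OF fB B]) (auto simp: u)
      ultimately show ?thesis by simp
    qed
    also have "\<dots> = M $ p $ q" by (simp add: u F)
    finally show "M $ p $ q = (\<Sum>b\<in>Bs. \<Sum>x\<in>Xs. \<Sum>y\<in>Xs. smat (F b x y) (unit_op bl ps cp b x y)) $ p $ q" by simp
  qed
  then show ?thesis by (rule that)
qed

lemma all_idx2_I:
  fixes P :: "idx \<Rightarrow> idx \<Rightarrow> bool"
  assumes "\<And>k i j k' i' j'. k \<in> {0,1} \<Longrightarrow> i \<in> {0,1,2,3} \<Longrightarrow> j \<in> {0,1,2,3} \<Longrightarrow>
   k' \<in> {0,1} \<Longrightarrow> i' \<in> {0,1,2,3} \<Longrightarrow> j' \<in> {0,1,2,3} \<Longrightarrow> P (k,i,j) (k',i',j')"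
  shows "\<forall>p q. P p q"
proof (intro allI)
  fix p q :: idx
  obtain k i j where p: "p = (k,i,j)" by (cases p) auto
  obtain k' i' j' where q: "q = (k',i',j')" by (cases q) auto
  show "P p q" unfolding p q by (rule assms) (simp_all only: UNIV4[symmetric] UNIV2'[symmetric] UNIV_I)
qed

lemma all_idx_I:
  fixes P :: "idx \<Rightarrow> bool"
  assumes "\<And>k i j. k \<in> {0,1} \<Longrightarrow> i \<in> {0,1,2,3} \<Longrightarrow> j \<in> {0,1,2,3} \<Longrightarrow> P (k,i,j)"
  shows "\<forall>p. P p"
proof (intro allI)
  fix p :: idx
  obtain k i j where p: "p = (k,i,j)" by (cases p) auto
  show "P p" unfolding p by (rule assms) (simp_all only: UNIV4[symmetric] UNIV2'[symmetric] UNIV_I)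
qed

lemma d4: "(0::4) \<noteq> 1" "(0::4) \<noteq> 2" "(0::4) \<noteq> 3" "(1::4) \<noteq> 2" "(1::4) \<noteq> 3" "(2::4) \<noteq> 3"
  "(1::4) \<noteq> 0" "(2::4) \<noteq> 0" "(3::4) \<noteq> 0" "(2::4) \<noteq> 1" "(3::4) \<noteq> 1" "(3::4) \<noteq> 2"
  "(0::2) \<noteq> 1" "(1::2) \<noteq> 0" "(1::2) - 0 = 1" "(1::2) - 1 = 0" by simp_all
lemma dn: "(0::nat) \<noteq> 1" "(0::nat) \<noteq> 2" "(0::nat) \<noteq> 3" "(0::nat) \<noteq> 4" "(1::nat) \<noteq> 2" "(1::nat) \<noteq> 3" "(1::nat) \<noteq> 4"
  "(2::nat) \<noteq> 3" "(2::nat) \<noteq> 4" "(3::nat) \<noteq> 4"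
  "(1::nat) \<noteq> 0" "(2::nat) \<noteq> 0" "(3::nat) \<noteq> 0" "(4::nat) \<noteq> 0" "(2::nat) \<noteq> 1" "(3::nat) \<noteq> 1" "(4::nat) \<noteq> 1"
  "(3::nat) \<noteq> 2" "(4::nat) \<noteq> 2" "(4::nat) \<noteq> 3"
  "(0::nat) \<noteq> 5" "(1::nat) \<noteq> 5" "(2::nat) \<noteq> 5" "(3::nat) \<noteq> 5" "(4::nat) \<noteq> 5"
  "(5::nat) \<noteq> 0" "(5::nat) \<noteq> 1" "(5::nat) \<noteq> 2" "(5::nat) \<noteq> 3" "(5::nat) \<noteq> 4"
  "(0::nat) \<noteq> 6" "(1::nat) \<noteq> 6" "(2::nat) \<noteq> 6" "(3::nat) \<noteq> 6" "(4::nat) \<noteq> 6" "(5::nat) \<noteq> 6"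
  "(6::nat) \<noteq> 0" "(6::nat) \<noteq> 1" "(6::nat) \<noteq> 2" "(6::nat) \<noteq> 3" "(6::nat) \<noteq> 4" "(6::nat) \<noteq> 5"
  "(0::nat) \<noteq> 7" "(1::nat) \<noteq> 7" "(2::nat) \<noteq> 7" "(3::nat) \<noteq> 7" "(4::nat) \<noteq> 7" "(5::nat) \<noteq> 7" "(6::nat) \<noteq> 7"
  "(7::nat) \<noteq> 0" "(7::nat) \<noteq> 1" "(7::nat) \<noteq> 2" "(7::nat) \<noteq> 3" "(7::nat) \<noteq> 4" "(7::nat) \<noteq> 5" "(7::nat) \<noteq> 6"
  by simp_all
lemmas fastsimps = d4 dn if_True if_False fst_conv snd_conv prod.inject simp_thms refl


lemma mm_add_r: "(A + B) ** C = A ** C + B ** (C::complex^'n^'n)"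
  by (simp add: vec_eq_iff mmult_apply algebra_simps sum.distrib)
lemma mm_diff_l: "A ** (B - C) = A ** B - A ** (C::complex^'n^'n)"
  by (simp add: vec_eq_iff mmult_apply algebra_simps sum_subtractf)
lemma mm_diff_r: "(A - B) ** C = A ** C - B ** (C::complex^'n^'n)"
  by (simp add: vec_eq_iff mmult_apply algebra_simps sum_subtractf)

definition J1 :: "complex^4^4" where "J1 = mat 1 - emat 0 0"

lemma m4_eqI: "(\<And>i j. i \<in> {0,1,2,3} \<Longrightarrow> j \<in> {0,1,2,3} \<Longrightarrow> (x::complex^4^4) $ i $ j = y $ i $ j) \<Longrightarrow> x = y"
  by (simp add: vec_eq_iff UNIV4[symmetric])
lemma m2_eqI: "(\<And>i j. i \<in> {0,1} \<Longrightarrow> j \<in> {0,1} \<Longrightarrow> (x::complex^2^2) $ i $ j = y $ i $ j) \<Longrightarrow> x = y"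
  by (simp add: vec_eq_iff UNIV2'[symmetric])

lemmas m4simps = mmult_apply sum4 emat_apply smat_apply cadj_apply mat1_apply J1_def diag1_def diag2_def
  Xmat_def Ymat_def cmat_def

lemma cmat_emat: "cmat (emat i j) = emat i j"
  by (simp add: vec_eq_iff cmat_def emat_apply)
lemma cmat_J1: "cmat J1 = J1"
  by (simp add: vec_eq_iff cmat_def J1_def emat_apply mat1_apply)
lemma flipc_00: "flipc (emat 0 0) = emat 1 1"
  by (rule m2_eqI) (auto simp: flipc_def emat_apply)
lemma flipc_01: "flipc (emat 0 1) = emat 1 0"
  by (rule m2_eqI) (auto simp: flipc_def emat_apply)
lemma flipc_10: "flipc (emat 1 0) = emat 0 1"
  by (rule m2_eqI) (auto simp: flipc_def emat_apply)

lemma D0_alt: "D0 Xa Xb Y = kron3 Xa (emat 0 0) (emat 0 0) + kron3 Xb (emat 0 0) J1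
              + kron3 Y (emat 0 1) (emat 0 0) + kron3 (cadj Y) (emat 1 0) (emat 0 0)"
  by (simp add: D0_def J1_def)

lemma Jconj_D0: "Jconj (D0 Xa Xb Y) = kron3 (emat 0 0) (emat 1 1) (cmat Xa) + kron3 J1 (emat 1 1) (cmat Xb)
   + kron3 (emat 0 0) (emat 1 0) (cmat Y) + kron3 (emat 0 0) (emat 0 1) (cmat (cadj Y))"
  by (simp add: D0_alt Jconj_add Jconj_kron3 cmat_emat cmat_J1 flipc_00 flipc_01 flipc_10)

lemma d1_E00: "diag1 l z w ** emat 0 0 = smat l (emat 0 0)"
  by (rule m4_eqI) (auto simp: m4simps)
lemma E00_d1: "emat 0 0 ** diag1 l z w = smat l (emat 0 0)"
  by (rule m4_eqI) (auto simp: m4simps)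
lemma d2_E00: "diag2 l m ** emat 0 0 = smat l (emat 0 0)"
  by (rule m4_eqI) (auto simp: m4simps)
lemma E00_d2: "emat 0 0 ** diag2 l m = smat l (emat 0 0)"
  by (rule m4_eqI) (auto simp: m4simps)
lemma d2_J1: "diag2 l m ** J1 = J1 ** diag2 l m"
  by (rule m4_eqI) (auto simp: m4simps)

lemmas ksimps = kron3_mult emat_mult matrix_add_ldistrib mm_add_r mm_diff_l mm_diff_r
  kron3_zero1 kron3_zero2 kron3_zero3 kron3_add1 kron3_add2 kron3_add3 kron3_smat1 kron3_smat2 kron3_smat3
  smat_add smat_mult1 smat_mult2 matrix_mul_lid matrix_mul_rid smat_zero smat_zero2

definition algel :: "complex \<Rightarrow> complex \<Rightarrow> complex \<Rightarrow> complex^4^4 \<Rightarrow> op" where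
  "algel l z w m = kron3 (diag1 l z w) (emat 0 0) (mat 1) + kron3 (diag2 l m) (emat 1 1) (mat 1)"

lemma algA_iff: "b \<in> algA \<longleftrightarrow> (\<exists>l z w m. b = algel l z w m)"
  by (auto simp: algA_def algel_def)

lemma comm_JD: "Jconj (D0 Xa Xb Y) ** algel l z w m = algel l z w m ** Jconj (D0 Xa Xb Y)"
  by (simp add: Jconj_D0 algel_def ksimps d1_E00 E00_d1 d2_E00 E00_d2 d2_J1 add_ac)

lemma comm_DR: "DR u ** algel l z w m = algel l z w m ** DR u"
  by (simp add: DR_def algel_def ksimps d1_E00 E00_d1 d2_E00 E00_d2 add_ac)

lemma comm_Dirac: "Dirac Xa Xb Y u ** algel l z w m - algel l z w m ** Dirac Xa Xb Y u
   = D0 Xa Xb Y ** algel l z w m - algel l z w m ** D0 Xa Xb Y"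
  by (simp add: Dirac_def matrix_add_ldistrib mm_add_r comm_JD comm_DR)

lemmas msimps = kron3_apply emat_apply mat1_apply J1_def diag1_def diag2_def Xmat_def Ymat_def cmat_def
  vec_lambda_beta mmult_apply sum4 sum2 smat_apply cadj_apply complex_cnj_zero complex_cnj_one
  mult_zero_left mult_zero_right mult_1_left mult_1_right add_0_left add_0_right diff_0 diff_0_right
  minus_zero diff_self complex_cnj_cnj complex_cnj_minus vector_add_component vector_minus_component
  vector_uminus_component zero_index

lemma algel_in: "algel l z w m \<in> algA"
  by (auto simp: algA_def algel_def)

lemma ClD_A: "X \<in> algA \<Longrightarrow> X \<in> ClD D"
  unfolding ClD_def by (rule star_alg_gen.gen) blast
lemma ClD_c: "a \<in> algA \<Longrightarrow> b \<in> algA \<Longrightarrow> a ** (D ** b - b ** D) \<in> ClD D"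
  unfolding ClD_def by (rule star_alg_gen.gen) blast
lemma ClD_add: "X \<in> ClD D \<Longrightarrow> Y \<in> ClD D \<Longrightarrow> X + Y \<in> ClD D"
  unfolding ClD_def by (rule star_alg_gen.add)
lemma ClD_smat: "X \<in> ClD D \<Longrightarrow> smat c X \<in> ClD D"
  unfolding ClD_def by (rule star_alg_gen.smult)
lemma ClD_mult: "X \<in> ClD D \<Longrightarrow> Y \<in> ClD D \<Longrightarrow> X ** Y \<in> ClD D"
  unfolding ClD_def by (rule star_alg_gen.mult)
lemma ClD_adj: "X \<in> ClD D \<Longrightarrow> cadj X \<in> ClD D"
  unfolding ClD_def by (rule star_alg_gen.adj)
lemma smat_m1: "X - Y = X + smat (-1) (Y::complex^'n^'n)"
  by (simp add: vec_eq_iff smat_apply)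
lemma ClD_diff: "X \<in> ClD D \<Longrightarrow> Y \<in> ClD D \<Longrightarrow> X - Y \<in> ClD D"
  unfolding smat_m1 by (intro ClD_add ClD_smat)
lemma ClD_zero: "0 \<in> ClD D"
proof -
  have "smat 0 (algel 0 0 0 0) \<in> ClD D" by (intro ClD_smat ClD_A algel_in)
  then show ?thesis by (simp add: smat_zero)
qed
lemma ClD_sum: "finite A \<Longrightarrow> (\<And>x. x \<in> A \<Longrightarrow> f x \<in> ClD D) \<Longrightarrow> sum f A \<in> ClD D"
  by (induction A rule: finite_induct) (auto intro: ClD_add ClD_zero)

lemma one_op: "algel 1 1 0 (mat 1) = mat 1"
proof -
  have "diag1 1 1 0 = mat 1"
    by (rule m4_eqI, elim insertE emptyE, simp_all only: fastsimps msimps)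
  have "diag2 1 (mat 1) = mat 1"
    by (rule m4_eqI, elim insertE emptyE, simp_all only: fastsimps msimps)
  moreover have "kron3 (mat 1) (emat 0 0) (mat 1) + kron3 (mat 1) (emat 1 1) (mat 1) = (mat 1 :: op)"
  proof (rule op_eqI)
    fix k i j k' i' j'
    show "(kron3 (mat 1) (emat 0 0) (mat 1) + kron3 (mat 1) (emat 1 1) (mat 1)) $ (k, i, j) $ (k', i', j') = (mat 1 :: op) $ (k, i, j) $ (k', i', j')"
      using exhaust_2[of k] exhaust_2[of k'] by (auto simp: kron3_apply mat1_apply emat_apply d4)
  qed
  ultimately show ?thesis by (simp add: algel_def \<open>diag1 1 1 0 = mat 1\<close>)
qed

lemma ClD_comm: "algel l z w m \<in> algA \<Longrightarrow> D ** algel l z w m - algel l z w m ** D \<in> ClD D"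
  using ClD_c[OF algel_in[of 1 1 0 "mat 1"], of "algel l z w m" D] by (simp add: one_op)


definition n4 :: "4 \<Rightarrow> nat" where "n4 x = (if x = 0 then 0 else if x = 1 then 1 else if x = 2 then 2 else 3)"

definition blG :: "idx \<Rightarrow> nat" where
  "blG p = (if fst p = 0 then (if snd (snd p) = 0 then (if fst (snd p) = 0 then 3 else 1) else 2)
            else (if fst (snd p) = 0 then (if snd (snd p) = 0 then 1 else 3) else 4))"
definition psG :: "idx \<Rightarrow> nat" where
  "psG p = (if blG p = 3 then 0 else n4 (fst (snd p)))"
definition cpG :: "idx \<Rightarrow> nat" where
  "cpG p = (if blG p = 1 then 0 else n4 (snd (snd p)))"
definition ptG :: "idx \<Rightarrow> idx \<Rightarrow> idx" where
  "ptG p c = (if blG p = 1 then p else if blG p = 3 then c else (fst p, fst (snd p), snd (snd c)))"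
definition rfG :: "idx \<Rightarrow> idx" where
  "rfG p = (if blG p = 1 then (0,1,0) else if blG p = 2 then (0,0,1) else if blG p = 3 then (0,0,0) else (1,1,0))"

lemmas G_defs = blG_def psG_def cpG_def ptG_def rfG_def n4_def

lemma regG: "regular blG psG cpG ptG"
proof -
  have 1: "\<forall>p q. blG p = blG q \<and> psG p = psG q \<and> cpG p = cpG q \<longrightarrow> p = q"
    by (rule all_idx2_I, elim insertE emptyE, simp_all only: fastsimps G_defs)
  have 2: "\<forall>p c. blG p = blG c \<longrightarrow> blG (ptG p c) = blG p \<and> psG (ptG p c) = psG p \<and> cpG (ptG p c) = cpG c"
    by (rule all_idx2_I, elim insertE emptyE, simp_all only: fastsimps G_defs)
  show ?thesis unfolding regular_def using 1 2 by blast
qed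

lemma rfG1: "blG (rfG p) = blG p"
proof -
  have "\<forall>p. blG (rfG p) = blG p"
    by (rule all_idx_I, elim insertE emptyE, simp_all only: fastsimps G_defs)
  then show ?thesis by blast
qed
lemma rfG2: "blG p = blG q \<Longrightarrow> rfG p = rfG q"
  by (simp add: rfG_def)

lemma algel_G: "algel l z w m \<in> blk blG psG cpG"
  apply (rule blk_criterion'[OF regG rfG1])
   apply (erule rfG2)
  apply (rule all_idx2_I)
  apply (elim insertE emptyE)
  apply (simp_all only: fastsimps msimps algel_def G_defs)
  done

abbreviation "D0s a23 a24 b13 b14 b23 b24 d21 \<equiv> D0 (Xmat 0 0 a23 a24) (Xmat b13 b14 b23 b24) (Ymat 0 0 0 d21 0 0 0)"

lemma comm_G: "D0s a23 a24 b13 b14 b23 b24 d21 ** algel l z w m - algel l z w m ** D0s a23 a24 b13 b14 b23 b24 d21 \<in> blk blG psG cpG"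
  apply (simp only: D0_alt algel_def kron3_mult matrix_add_ldistrib mm_add_r)
  apply (rule blk_criterion'[OF regG rfG1])
   apply (erule rfG2)
  apply (rule all_idx2_I)
  apply (elim insertE emptyE)
  apply (simp_all only: fastsimps msimps G_defs)
  done

lemma ClD_sub:
  fixes bl :: "idx \<Rightarrow> nat"
  assumes reg: "regular bl ps cp pt"
    and A: "\<And>l z w m. algel l z w m \<in> blk bl ps cp"
    and C: "\<And>l z w m. D0 Xa Xb Y ** algel l z w m - algel l z w m ** D0 Xa Xb Y \<in> blk bl ps cp"
  shows "ClD (Dirac Xa Xb Y u) \<subseteq> blk bl ps cp"
  unfolding ClD_def
proof (rule blk_gen[OF reg], safe)
  fix X assume "X \<in> algA" then show "X \<in> blk bl ps cp" using A by (auto simp: algA_iff)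
next
  fix a b assume a: "a \<in> algA" and b: "b \<in> algA"
  then obtain l z w m where bb: "b = algel l z w m" by (auto simp: algA_iff)
  show "a ** (Dirac Xa Xb Y u ** b - b ** Dirac Xa Xb Y u) \<in> blk bl ps cp"
    unfolding bb comm_Dirac
    by (rule blk_mult[OF reg]) (use a A C in \<open>auto simp: algA_iff\<close>)
qed

lemma ClD_G: "ClD (Dirac (Xmat 0 0 a23 a24) (Xmat b13 b14 b23 b24) (Ymat 0 0 0 d21 0 0 0) u) \<subseteq> blk blG psG cpG"
  by (rule ClD_sub[OF regG algel_G comm_G])

definition diagQ :: "idx set \<Rightarrow> op" where
  "diagQ Q = (\<chi> p q. if p = q \<and> p \<in> Q then 1 else 0)"

lemma opp_diagQ: "opp (diagQ Q) = diagQ (sw ` Q)"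
proof -
  have "(sw q = sw p \<and> sw q \<in> Q) \<longleftrightarrow> (p = q \<and> p \<in> sw ` Q)" for p q
    by (metis image_iff sw_sw)
  then show ?thesis by (simp add: vec_eq_iff opp_apply diagQ_def)
qed

lemma diagQ_blk:
  assumes reg: "regular bl ps cp pt"
    and Q: "\<And>p r. p \<in> Q \<Longrightarrow> bl r = bl p \<Longrightarrow> cp r = cp p \<Longrightarrow> r \<in> Q"
  shows "diagQ Q \<in> blk bl cp ps"
proof (rule blkI[where F="\<lambda>b c c'. if c = c' \<and> (\<exists>r\<in>Q. bl r = b \<and> cp r = c) then 1 else 0"])
  fix p q
  show "diagQ Q $ p $ q = (if bl p = bl q \<and> ps p = ps q then (if cp p = cp q \<and> (\<exists>r\<in>Q. bl r = bl p \<and> cp r = cp p) then 1 else 0) else 0)"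
  proof (cases "p = q")
    case True
    have "(\<exists>r\<in>Q. bl r = bl p \<and> cp r = cp p) \<longleftrightarrow> p \<in> Q"
    proof
      assume "\<exists>r\<in>Q. bl r = bl p \<and> cp r = cp p"
      then obtain r where "r \<in> Q" "bl p = bl r" "cp p = cp r" by metis
      then show "p \<in> Q" by (rule Q)
    qed blast
    then show ?thesis using True by (simp add: diagQ_def)
  next
    case False
    then have "\<not> (bl p = bl q \<and> ps p = ps q \<and> cp p = cp q)" using regularD1[OF reg, of p q] by blast
    then show ?thesis using False by (auto simp: diagQ_def)
  qed
qed

lemma diagQ_not_blk:
  assumes "q0 \<in> Q" "r0 \<notin> Q" "bl r0 = bl q0" "ps r0 = ps q0"
  shows "diagQ Q \<notin> blk bl ps cp"
proof
  assume "diagQ Q \<in> blk bl ps cp"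
  then obtain F where F: "\<And>p q. diagQ Q $ p $ q = (if bl p = bl q \<and> cp p = cp q then F (bl p) (ps p) (ps q) else 0)"
    by (rule blkE) blast
  have "diagQ Q $ q0 $ q0 = F (bl q0) (ps q0) (ps q0)" using F[of q0 q0] by simp
  moreover have "diagQ Q $ r0 $ r0 = F (bl q0) (ps q0) (ps q0)" using F[of r0 r0] assms by simp
  ultimately show False using assms by (simp add: diagQ_def)
qed

lemma not_hodge:
  fixes bl :: "idx \<Rightarrow> nat"
  assumes reg: "regular bl ps cp pt" and sub: "ClD D \<subseteq> blk bl ps cp"
    and Q: "\<And>p r. p \<in> Q \<Longrightarrow> bl r = bl p \<Longrightarrow> cp r = cp p \<Longrightarrow> r \<in> Q"
    and q0: "q0 \<in> sw ` Q" and r0: "r0 \<notin> sw ` Q" and e: "bl r0 = bl q0" "ps r0 = ps q0"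
  shows "\<not> hodge D"
proof
  assume h: "hodge D"
  have "diagQ Q \<in> commutant (blk bl ps cp)"
    unfolding commutant_blk[OF reg] by (rule diagQ_blk[OF reg Q])
  then have c: "\<forall>Y\<in>blk bl ps cp. diagQ Q ** Y = Y ** diagQ Q" unfolding commutant_def by simp
  have "diagQ Q \<in> commutant (ClD D)" unfolding commutant_def using c sub by blast
  then have "diagQ Q \<in> opp ` ClD D" using h unfolding hodge_def by simp
  then obtain Y where Y: "Y \<in> ClD D" "diagQ Q = opp Y" by blast
  then have "opp (diagQ Q) \<in> blk bl ps cp" using sub by (simp add: opp_opp subset_iff)
  then have "diagQ (sw ` Q) \<in> blk bl ps cp" by (simp add: opp_diagQ)
  then show False using diagQ_not_blk[OF q0 r0 e] by blast
qed


definition n4b :: "4 \<Rightarrow> nat" where "n4b x = (if x = 0 then 4 else if x = 1 then 5 else if x = 2 then 6 else 7)"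

definition blD :: "idx \<Rightarrow> nat" where "blD p = (if fst p = 0 then (if snd (snd p) = 0 then (if fst (snd p) = 0 then 3 else 1) else 2) else (if fst (snd p) = 0 then 3 else 4))"
definition psD :: "idx \<Rightarrow> nat" where "psD p = (if blD p = 3 then 0 else n4 (fst (snd p)))"
definition cpD :: "idx \<Rightarrow> nat" where "cpD p = (if blD p = 1 then 0 else if blD p = 3 then (if fst p = 0 then 4 else n4 (snd (snd p))) else n4 (snd (snd p)))"
definition ptD :: "idx \<Rightarrow> idx \<Rightarrow> idx" where "ptD p c = (if blD p = 1 then p else if blD p = 3 then c else (fst p, fst (snd p), snd (snd c)))"
definition rfD :: "idx \<Rightarrow> idx" where "rfD p = (if blD p = 1 then (0,1,0) else if blD p = 2 then (0,0,1) else if blD p = 3 then (0,0,0) else (1,1,0))"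
lemmas D_defs = blD_def psD_def cpD_def ptD_def rfD_def n4_def

lemma regD: "regular blD psD cpD ptD"
proof -
  have 1: "\<forall>p q. blD p = blD q \<and> psD p = psD q \<and> cpD p = cpD q \<longrightarrow> p = q"
    by (rule all_idx2_I, elim insertE emptyE, simp_all only: fastsimps D_defs)
  have 2: "\<forall>p c. blD p = blD c \<longrightarrow> blD (ptD p c) = blD p \<and> psD (ptD p c) = psD p \<and> cpD (ptD p c) = cpD c"
    by (rule all_idx2_I, elim insertE emptyE, simp_all only: fastsimps D_defs)
  show ?thesis unfolding regular_def using 1 2 by blast
qed

lemma rfD1: "blD (rfD p) = blD p"
proof -
  have "\<forall>p. blD (rfD p) = blD p"
    by (rule all_idx_I, elim insertE emptyE, simp_all only: fastsimps D_defs)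
  then show ?thesis by blast
qed
lemma rfD2: "blD p = blD q \<Longrightarrow> rfD p = rfD q"
  by (simp add: rfD_def)

lemma algel_D: "algel l z w m \<in> blk blD psD cpD"
  apply (rule blk_criterion'[OF regD rfD1])
   apply (erule rfD2)
  apply (rule all_idx2_I)
  apply (elim insertE emptyE)
  apply (simp_all only: fastsimps msimps algel_def D_defs)
  done

lemma comm_D: "D0s a23 a24 b13 b14 b23 b24 0 ** algel l z w m - algel l z w m ** D0s a23 a24 b13 b14 b23 b24 0 \<in> blk blD psD cpD"
  apply (simp only: D0_alt algel_def kron3_mult matrix_add_ldistrib mm_add_r)
  apply (rule blk_criterion'[OF regD rfD1])
   apply (erule rfD2)
  apply (rule all_idx2_I)
  apply (elim insertE emptyE)
  apply (simp_all only: fastsimps msimps D_defs)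
  done

lemma nh_D: "\<not> hodge (Dirac (Xmat 0 0 a23 a24) (Xmat b13 b14 b23 b24) (Ymat 0 0 0 0 0 0 0) u)"
proof (rule not_hodge[OF regD ClD_sub[OF regD algel_D comm_D]])
  have all: "\<forall>p r. p \<in> {(0,0,0)} \<longrightarrow> blD r = blD p \<longrightarrow> cpD r = cpD p \<longrightarrow> r \<in> {(0,0,0)}"
  proof (rule all_idx2_I)
    fix k k' :: 2 and i j i' j' :: 4
    assume "k \<in> {0,1}" "i \<in> {0,1,2,3}" "j \<in> {0,1,2,3}" "k' \<in> {0,1}" "i' \<in> {0,1,2,3}" "j' \<in> {0,1,2,3}"
    then show "(k,i,j) \<in> {(0,0,0)} \<longrightarrow> blD (k',i',j') = blD (k,i,j) \<longrightarrow> cpD (k',i',j') = cpD (k,i,j) \<longrightarrow> (k',i',j') \<in> {(0,0,0)}"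
      by (elim insertE emptyE, simp_all only: fastsimps D_defs insert_iff empty_iff)
  qed
  show "\<And>p r. p \<in> {(0,0,0)} \<Longrightarrow> blD r = blD p \<Longrightarrow> cpD r = cpD p \<Longrightarrow> r \<in> {(0,0,0)}"
    using all by blast
  show "(1,0,0) \<in> sw ` {(0,0,0)}" by (simp add: sw_def)
  show "(1,0,1) \<notin> sw ` {(0,0,0)}" by (simp add: sw_def)
  show "blD (1,0,1) = blD (1,0,0)" by (simp add: D_defs)
  show "psD (1,0,1) = psD (1,0,0)" by (simp add: D_defs)
qed

definition blA :: "idx \<Rightarrow> nat" where "blA p = (if fst p = 0 then (if snd (snd p) = 0 then (if fst (snd p) = 0 then 3 else if fst (snd p) = 1 then 1 else 5) else 2) else (if fst (snd p) = 0 then (if snd (snd p) = 0 then 1 else 3) else 4))"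
definition psA :: "idx \<Rightarrow> nat" where "psA p = (if blA p = 3 then 0 else n4 (fst (snd p)))"
definition cpA :: "idx \<Rightarrow> nat" where "cpA p = (if blA p = 1 \<or> blA p = 5 then 0 else n4 (snd (snd p)))"
definition ptA :: "idx \<Rightarrow> idx \<Rightarrow> idx" where "ptA p c = (if blA p = 1 \<or> blA p = 5 then p else if blA p = 3 then c else (fst p, fst (snd p), snd (snd c)))"
definition rfA :: "idx \<Rightarrow> idx" where "rfA p = (if blA p = 1 then (0,1,0) else if blA p = 5 then (0,2,0) else if blA p = 2 then (0,0,1) else if blA p = 3 then (0,0,0) else (1,1,0))"
lemmas A_defs = blA_def psA_def cpA_def ptA_def rfA_def n4_def

lemma regA: "regular blA psA cpA ptA"
proof -
  have 1: "\<forall>p q. blA p = blA q \<and> psA p = psA q \<and> cpA p = cpA q \<longrightarrow> p = q"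
    by (rule all_idx2_I, elim insertE emptyE, simp_all only: fastsimps A_defs)
  have 2: "\<forall>p c. blA p = blA c \<longrightarrow> blA (ptA p c) = blA p \<and> psA (ptA p c) = psA p \<and> cpA (ptA p c) = cpA c"
    by (rule all_idx2_I, elim insertE emptyE, simp_all only: fastsimps A_defs)
  show ?thesis unfolding regular_def using 1 2 by blast
qed

lemma rfA1: "blA (rfA p) = blA p"
proof -
  have "\<forall>p. blA (rfA p) = blA p"
    by (rule all_idx_I, elim insertE emptyE, simp_all only: fastsimps A_defs)
  then show ?thesis by blast
qed
lemma rfA2: "blA p = blA q \<Longrightarrow> rfA p = rfA q"
  by (simp add: rfA_def)

lemma algel_A: "algel l z w m \<in> blk blA psA cpA"
  apply (rule blk_criterion'[OF regA rfA1])
   apply (erule rfA2)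
  apply (rule all_idx2_I)
  apply (elim insertE emptyE)
  apply (simp_all only: fastsimps msimps algel_def A_defs)
  done

lemma comm_A: "D0s 0 0 b13 b14 b23 b24 d21 ** algel l z w m - algel l z w m ** D0s 0 0 b13 b14 b23 b24 d21 \<in> blk blA psA cpA"
  apply (simp only: D0_alt algel_def kron3_mult matrix_add_ldistrib mm_add_r)
  apply (rule blk_criterion'[OF regA rfA1])
   apply (erule rfA2)
  apply (rule all_idx2_I)
  apply (elim insertE emptyE)
  apply (simp_all only: fastsimps msimps A_defs)
  done

lemma nh_A: "\<not> hodge (Dirac (Xmat 0 0 0 0) (Xmat b13 b14 b23 b24) (Ymat 0 0 0 d21 0 0 0) u)"
proof (rule not_hodge[OF regA ClD_sub[OF regA algel_A comm_A]])
  have all: "\<forall>p r. p \<in> {(0,2,0),(0,3,0)} \<longrightarrow> blA r = blA p \<longrightarrow> cpA r = cpA p \<longrightarrow> r \<in> {(0,2,0),(0,3,0)}"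
  proof (rule all_idx2_I)
    fix k k' :: 2 and i j i' j' :: 4
    assume "k \<in> {0,1}" "i \<in> {0,1,2,3}" "j \<in> {0,1,2,3}" "k' \<in> {0,1}" "i' \<in> {0,1,2,3}" "j' \<in> {0,1,2,3}"
    then show "(k,i,j) \<in> {(0,2,0),(0,3,0)} \<longrightarrow> blA (k',i',j') = blA (k,i,j) \<longrightarrow> cpA (k',i',j') = cpA (k,i,j) \<longrightarrow> (k',i',j') \<in> {(0,2,0),(0,3,0)}"
      by (elim insertE emptyE, simp_all only: fastsimps A_defs insert_iff empty_iff)
  qed
  show "\<And>p r. p \<in> {(0,2,0),(0,3,0)} \<Longrightarrow> blA r = blA p \<Longrightarrow> cpA r = cpA p \<Longrightarrow> r \<in> {(0,2,0),(0,3,0)}"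
    using all by blast
  show "(1,0,2) \<in> sw ` {(0,2,0),(0,3,0)}" by (simp add: sw_def)
  show "(1,0,1) \<notin> sw ` {(0,2,0),(0,3,0)}" by (simp add: sw_def)
  show "blA (1,0,1) = blA (1,0,2)" by (simp add: A_defs)
  show "psA (1,0,1) = psA (1,0,2)" by (simp add: A_defs)
qed

definition blB1 :: "idx \<Rightarrow> nat" where "blB1 p = (if fst p = 0 then (if fst (snd p) = 0 then 3 else if snd (snd p) = 0 then 1 else 2) else (if fst (snd p) = 0 then (if snd (snd p) = 0 then 1 else 3) else 4))"
definition psB1 :: "idx \<Rightarrow> nat" where "psB1 p = (if blB1 p = 3 then 0 else n4 (fst (snd p)))"
definition cpB1 :: "idx \<Rightarrow> nat" where "cpB1 p = (if blB1 p = 1 then 0 else if blB1 p = 3 then (if fst p = 0 then n4b (snd (snd p)) else n4 (snd (snd p))) else n4 (snd (snd p)))"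
definition ptB1 :: "idx \<Rightarrow> idx \<Rightarrow> idx" where "ptB1 p c = (if blB1 p = 1 then p else if blB1 p = 3 then c else (fst p, fst (snd p), snd (snd c)))"
definition rfB1 :: "idx \<Rightarrow> idx" where "rfB1 p = (if blB1 p = 1 then (0,1,0) else if blB1 p = 2 then (0,1,1) else if blB1 p = 3 then (0,0,0) else (1,1,0))"
lemmas B1_defs = blB1_def psB1_def cpB1_def ptB1_def rfB1_def n4_def n4b_def

lemma regB1: "regular blB1 psB1 cpB1 ptB1"
proof -
  have 1: "\<forall>p q. blB1 p = blB1 q \<and> psB1 p = psB1 q \<and> cpB1 p = cpB1 q \<longrightarrow> p = q"
    by (rule all_idx2_I, elim insertE emptyE, simp_all only: fastsimps B1_defs)
  have 2: "\<forall>p c. blB1 p = blB1 c \<longrightarrow> blB1 (ptB1 p c) = blB1 p \<and> psB1 (ptB1 p c) = psB1 p \<and> cpB1 (ptB1 p c) = cpB1 c"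
    by (rule all_idx2_I, elim insertE emptyE, simp_all only: fastsimps B1_defs)
  show ?thesis unfolding regular_def using 1 2 by blast
qed

lemma rfB11: "blB1 (rfB1 p) = blB1 p"
proof -
  have "\<forall>p. blB1 (rfB1 p) = blB1 p"
    by (rule all_idx_I, elim insertE emptyE, simp_all only: fastsimps B1_defs)
  then show ?thesis by blast
qed
lemma rfB12: "blB1 p = blB1 q \<Longrightarrow> rfB1 p = rfB1 q"
  by (simp add: rfB1_def)

lemma algel_B1: "algel l z w m \<in> blk blB1 psB1 cpB1"
  apply (rule blk_criterion'[OF regB1 rfB11])
   apply (erule rfB12)
  apply (rule all_idx2_I)
  apply (elim insertE emptyE)
  apply (simp_all only: fastsimps msimps algel_def B1_defs)
  done

lemma comm_B1: "D0s a23 a24 0 0 b23 b24 d21 ** algel l z w m - algel l z w m ** D0s a23 a24 0 0 b23 b24 d21 \<in> blk blB1 psB1 cpB1"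
  apply (simp only: D0_alt algel_def kron3_mult matrix_add_ldistrib mm_add_r)
  apply (rule blk_criterion'[OF regB1 rfB11])
   apply (erule rfB12)
  apply (rule all_idx2_I)
  apply (elim insertE emptyE)
  apply (simp_all only: fastsimps msimps B1_defs)
  done

lemma nh_B1: "\<not> hodge (Dirac (Xmat 0 0 a23 a24) (Xmat 0 0 b23 b24) (Ymat 0 0 0 d21 0 0 0) u)"
proof (rule not_hodge[OF regB1 ClD_sub[OF regB1 algel_B1 comm_B1]])
  have all: "\<forall>p r. p \<in> {(0,0,1)} \<longrightarrow> blB1 r = blB1 p \<longrightarrow> cpB1 r = cpB1 p \<longrightarrow> r \<in> {(0,0,1)}"
  proof (rule all_idx2_I)
    fix k k' :: 2 and i j i' j' :: 4
    assume "k \<in> {0,1}" "i \<in> {0,1,2,3}" "j \<in> {0,1,2,3}" "k' \<in> {0,1}" "i' \<in> {0,1,2,3}" "j' \<in> {0,1,2,3}"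
    then show "(k,i,j) \<in> {(0,0,1)} \<longrightarrow> blB1 (k',i',j') = blB1 (k,i,j) \<longrightarrow> cpB1 (k',i',j') = cpB1 (k,i,j) \<longrightarrow> (k',i',j') \<in> {(0,0,1)}"
      by (elim insertE emptyE, simp_all only: fastsimps B1_defs insert_iff empty_iff)
  qed
  show "\<And>p r. p \<in> {(0,0,1)} \<Longrightarrow> blB1 r = blB1 p \<Longrightarrow> cpB1 r = cpB1 p \<Longrightarrow> r \<in> {(0,0,1)}"
    using all by blast
  show "(1,1,0) \<in> sw ` {(0,0,1)}" by (simp add: sw_def)
  show "(1,1,1) \<notin> sw ` {(0,0,1)}" by (simp add: sw_def)
  show "blB1 (1,1,1) = blB1 (1,1,0)" by (simp add: B1_defs)
  show "psB1 (1,1,1) = psB1 (1,1,0)" by (simp add: B1_defs)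
qed

definition blB2 :: "idx \<Rightarrow> nat" where "blB2 p = (if fst p = 0 then (if snd (snd p) = 0 then (if fst (snd p) = 0 then 3 else 1) else (if fst (snd p) = 1 then 5 else 2)) else (if fst (snd p) = 0 then (if snd (snd p) = 0 then 1 else 3) else 4))"
definition psB2 :: "idx \<Rightarrow> nat" where "psB2 p = (if blB2 p = 3 \<or> blB2 p = 5 then 0 else n4 (fst (snd p)))"
definition cpB2 :: "idx \<Rightarrow> nat" where "cpB2 p = (if blB2 p = 1 then 0 else n4 (snd (snd p)))"
definition ptB2 :: "idx \<Rightarrow> idx \<Rightarrow> idx" where "ptB2 p c = (if blB2 p = 1 then p else if blB2 p = 3 \<or> blB2 p = 5 then c else (fst p, fst (snd p), snd (snd c)))"
definition rfB2 :: "idx \<Rightarrow> idx" where "rfB2 p = (if blB2 p = 1 then (0,1,0) else if blB2 p = 2 then (0,0,1) else if blB2 p = 3 then (0,0,0) else if blB2 p = 5 then (0,1,1) else (1,1,0))"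
lemmas B2_defs = blB2_def psB2_def cpB2_def ptB2_def rfB2_def n4_def

lemma regB2: "regular blB2 psB2 cpB2 ptB2"
proof -
  have 1: "\<forall>p q. blB2 p = blB2 q \<and> psB2 p = psB2 q \<and> cpB2 p = cpB2 q \<longrightarrow> p = q"
    by (rule all_idx2_I, elim insertE emptyE, simp_all only: fastsimps B2_defs)
  have 2: "\<forall>p c. blB2 p = blB2 c \<longrightarrow> blB2 (ptB2 p c) = blB2 p \<and> psB2 (ptB2 p c) = psB2 p \<and> cpB2 (ptB2 p c) = cpB2 c"
    by (rule all_idx2_I, elim insertE emptyE, simp_all only: fastsimps B2_defs)
  show ?thesis unfolding regular_def using 1 2 by blast
qed

lemma rfB21: "blB2 (rfB2 p) = blB2 p"
proof -
  have "\<forall>p. blB2 (rfB2 p) = blB2 p"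
    by (rule all_idx_I, elim insertE emptyE, simp_all only: fastsimps B2_defs)
  then show ?thesis by blast
qed
lemma rfB22: "blB2 p = blB2 q \<Longrightarrow> rfB2 p = rfB2 q"
  by (simp add: rfB2_def)

lemma algel_B2: "algel l z w m \<in> blk blB2 psB2 cpB2"
  apply (rule blk_criterion'[OF regB2 rfB21])
   apply (erule rfB22)
  apply (rule all_idx2_I)
  apply (elim insertE emptyE)
  apply (simp_all only: fastsimps msimps algel_def B2_defs)
  done

lemma comm_B2: "D0s a23 a24 b13 b14 0 0 d21 ** algel l z w m - algel l z w m ** D0s a23 a24 b13 b14 0 0 d21 \<in> blk blB2 psB2 cpB2"
  apply (simp only: D0_alt algel_def kron3_mult matrix_add_ldistrib mm_add_r)
  apply (rule blk_criterion'[OF regB2 rfB21])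
   apply (erule rfB22)
  apply (rule all_idx2_I)
  apply (elim insertE emptyE)
  apply (simp_all only: fastsimps msimps B2_defs)
  done

lemma nh_B2: "\<not> hodge (Dirac (Xmat 0 0 a23 a24) (Xmat b13 b14 0 0) (Ymat 0 0 0 d21 0 0 0) u)"
proof (rule not_hodge[OF regB2 ClD_sub[OF regB2 algel_B2 comm_B2]])
  have all: "\<forall>p r. p \<in> {(0,1,1)} \<longrightarrow> blB2 r = blB2 p \<longrightarrow> cpB2 r = cpB2 p \<longrightarrow> r \<in> {(0,1,1)}"
  proof (rule all_idx2_I)
    fix k k' :: 2 and i j i' j' :: 4
    assume "k \<in> {0,1}" "i \<in> {0,1,2,3}" "j \<in> {0,1,2,3}" "k' \<in> {0,1}" "i' \<in> {0,1,2,3}" "j' \<in> {0,1,2,3}"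
    then show "(k,i,j) \<in> {(0,1,1)} \<longrightarrow> blB2 (k',i',j') = blB2 (k,i,j) \<longrightarrow> cpB2 (k',i',j') = cpB2 (k,i,j) \<longrightarrow> (k',i',j') \<in> {(0,1,1)}"
      by (elim insertE emptyE, simp_all only: fastsimps B2_defs insert_iff empty_iff)
  qed
  show "\<And>p r. p \<in> {(0,1,1)} \<Longrightarrow> blB2 r = blB2 p \<Longrightarrow> cpB2 r = cpB2 p \<Longrightarrow> r \<in> {(0,1,1)}"
    using all by blast
  show "(1,1,1) \<in> sw ` {(0,1,1)}" by (simp add: sw_def)
  show "(1,1,0) \<notin> sw ` {(0,1,1)}" by (simp add: sw_def)
  show "blB2 (1,1,0) = blB2 (1,1,1)" by (simp add: B2_defs)
  show "psB2 (1,1,0) = psB2 (1,1,1)" by (simp add: B2_defs)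
qed


definition Kop :: "complex^4^4 \<Rightarrow> complex^4^4 \<Rightarrow> op" where
  "Kop x y = kron3 x (emat 0 0) (mat 1) + kron3 y (emat 1 1) (mat 1)"

lemma algel_Kop: "algel l z w m = Kop (diag1 l z w) (diag2 l m)" by (simp add: algel_def Kop_def)
lemma Kop_add: "Kop x y + Kop x' y' = Kop (x + x') (y + y')" by (simp add: Kop_def kron3_add1 add_ac)
lemma Kop_smat: "smat c (Kop x y) = Kop (smat c x) (smat c y)" by (simp add: Kop_def kron3_smat1 smat_add)

definition "Pa = Kop (emat 0 0) (emat 0 0)"
definition "Pb = Kop (emat 1 1) 0"
definition "Cm x y = Kop (emat x y) 0"

definition "comm X A = X ** A - A ** (X::op)"
lemma comm_add: "comm X (A + B) = comm X A + comm X B"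
  by (simp add: comm_def matrix_add_ldistrib mm_add_r)
lemma comm_smat: "comm X (smat c A) = smat c (comm X A)"
  by (simp add: comm_def smat_mult1 smat_mult2 smat_diff)

lemma Pa_alg: "Pa = smat (1/2) (algel 1 0 0 0 + smat (- \<i>) (algel \<i> 0 0 0))"
proof -
  have "smat (1/2) (diag1 1 0 0 + smat (- \<i>) (diag1 \<i> 0 0)) = emat 0 0"
    by (rule m4_eqI) (auto simp: m4simps)
  moreover have "smat (1/2) (diag2 1 0 + smat (- \<i>) (diag2 \<i> 0)) = emat 0 0"
    by (rule m4_eqI) (auto simp: m4simps)
  ultimately show ?thesis by (simp add: Pa_def algel_Kop Kop_add Kop_smat)
qed
lemma Pb_alg: "Pb = smat (1/2) (algel 1 0 0 0 + smat \<i> (algel \<i> 0 0 0))"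
proof -
  have "smat (1/2) (diag1 1 0 0 + smat \<i> (diag1 \<i> 0 0)) = emat 1 1"
    by (rule m4_eqI) (auto simp: m4simps)
  moreover have "smat (1/2) (diag2 1 0 + smat \<i> (diag2 \<i> 0)) = 0"
    by (rule m4_eqI) (auto simp: m4simps)
  ultimately show ?thesis by (simp add: Pb_def algel_Kop Kop_add Kop_smat)
qed
lemma C22_alg: "Cm 2 2 = smat (1/2) (algel 0 1 0 0 + smat (- \<i>) (algel 0 \<i> 0 0))"
proof -
  have "smat (1/2) (diag1 0 1 0 + smat (- \<i>) (diag1 0 \<i> 0)) = emat 2 2"
    by (rule m4_eqI) (auto simp: m4simps)
  moreover have "smat (1/2) (diag2 0 0 + smat (- \<i>) (diag2 0 0)) = 0"
    by (rule m4_eqI) (auto simp: m4simps)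
  ultimately show ?thesis by (simp add: Cm_def algel_Kop Kop_add Kop_smat)
qed
lemma C33_alg: "Cm 3 3 = smat (1/2) (algel 0 1 0 0 + smat \<i> (algel 0 \<i> 0 0))"
proof -
  have "smat (1/2) (diag1 0 1 0 + smat \<i> (diag1 0 \<i> 0)) = emat 3 3"
    by (rule m4_eqI) (auto simp: m4simps)
  moreover have "smat (1/2) (diag2 0 0 + smat \<i> (diag2 0 0)) = 0"
    by (rule m4_eqI) (auto simp: m4simps)
  ultimately show ?thesis by (simp add: Cm_def algel_Kop Kop_add Kop_smat)
qed
lemma C23_alg: "Cm 2 3 = smat (1/2) (algel 0 0 1 0 + smat (- \<i>) (algel 0 0 \<i> 0))"
proof -
  have "smat (1/2) (diag1 0 0 1 + smat (- \<i>) (diag1 0 0 \<i>)) = emat 2 3"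
    by (rule m4_eqI) (auto simp: m4simps)
  moreover have "smat (1/2) (diag2 0 0 + smat (- \<i>) (diag2 0 0)) = 0"
    by (rule m4_eqI) (auto simp: m4simps)
  ultimately show ?thesis by (simp add: Cm_def algel_Kop Kop_add Kop_smat)
qed
lemma C32_alg: "Cm 3 2 = smat (1/2) (smat (-1) (algel 0 0 1 0) + smat (- \<i>) (algel 0 0 \<i> 0))"
proof -
  have "smat (1/2) (smat (-1) (diag1 0 0 1) + smat (- \<i>) (diag1 0 0 \<i>)) = emat 3 2"
    by (rule m4_eqI) (auto simp: m4simps)
  moreover have "smat (1/2) (smat (-1) (diag2 0 0) + smat (- \<i>) (diag2 0 0)) = 0"
    by (rule m4_eqI) (auto simp: m4simps)
  ultimately show ?thesis by (simp add: Cm_def algel_Kop Kop_add Kop_smat)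
qed


lemma op_enumI: "(\<forall>p q. (X::op) $ p $ q = Y $ p $ q) \<Longrightarrow> X = Y"
  by (simp add: vec_eq_iff)

lemma J1_J1: "J1 ** J1 = J1" by (rule m4_eqI) (auto simp: m4simps)
lemma cadj_J1: "cadj J1 = J1" by (rule m4_eqI) (auto simp: m4simps)
lemma E00_J1: "emat 0 0 ** J1 = 0" by (rule m4_eqI) (auto simp: m4simps)
lemma J1_E00: "J1 ** emat 0 0 = 0" by (rule m4_eqI) (auto simp: m4simps)

lemma sandwich1: "(emat i j ** X) ** emat k l = smat (X $ j $ k) (emat i l :: complex^'n^'n)"
  by (auto simp: vec_eq_iff mmult_apply emat_apply smat_apply if_distrib[of "\<lambda>x. x * _"] if_distrib[of "\<lambda>x. _ * x"] sum.delta' cong: if_cong)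
lemma sandwich2: "emat i j ** (X ** emat k l) = smat (X $ j $ k) (emat i l :: complex^'n^'n)"
  by (simp add: matrix_mul_assoc sandwich1)

lemma emat_assoc1: "emat a b ** (emat c d ** X) = (if b = c then emat a d ** X else (0::complex^'n^'n))"
  by (simp add: matrix_mul_assoc emat_mult)
lemma emat_assoc2: "(X ** emat a b) ** emat c d = (if b = c then X ** emat a d else (0::complex^'n^'n))"
  by (simp add: matrix_mul_assoc[symmetric] emat_mult)

lemmas zsimps = emat_assoc1 emat_assoc2 ksimps sandwich1 sandwich2 times0_left times0_right Xmat_def Ymat_def cadj_apply
  smat_zero smat_zero2 kron3_zero1 kron3_zero2 kron3_zero3 J1_E00 E00_J1 J1_J1

lemma Zt_eq: "Pb ** comm (D0s a23 a24 b13 b14 b23 b24 d21) Pa = smat d21 (kron3 (emat 1 0) (emat 0 1) (emat 0 0))"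
  by (simp add: comm_def Pa_def Pb_def Kop_def D0_alt zsimps)

lemma Wt_eq: "Pb ** comm (D0s a23 a24 b13 b14 b23 b24 d21) (Cm 2 2 + Cm 3 3) =
   kron3 (smat a23 (emat 1 2) + smat a24 (emat 1 3)) (emat 0 0) (emat 0 0)
 + kron3 (smat b23 (emat 1 2) + smat b24 (emat 1 3)) (emat 0 0) J1"
  by (simp add: comm_def Cm_def Pb_def Kop_def D0_alt zsimps add_ac)

lemma Vt_eq: "Pa ** comm (D0s a23 a24 b13 b14 b23 b24 d21) (Cm 2 2 + Cm 3 3) =
   kron3 (smat b13 (emat 0 2) + smat b14 (emat 0 3)) (emat 0 0) J1"
  by (simp add: comm_def Cm_def Pa_def Kop_def D0_alt zsimps add_ac)

definition lk :: "4 \<Rightarrow> 2" where "lk x = (if x = 0 then 1 else 0)"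
definition "U1 x y = kron3 (emat x y) (emat (lk x) (lk y)) (emat 0 0)"
definition "U2 x y = kron3 (emat x y) (emat 0 0) J1"
definition "U3 = kron3 (emat 0 0) (emat 0 0) (emat 0 0) + kron3 (emat 0 0) (emat 1 1) J1"
definition "U4 x y = kron3 (emat x y) (emat 1 1) (mat 1)"

lemma smat_comb: "smat c X + smat d X = smat (c + d) X" by (simp add: smat_addc)

lemma U1_hub: "U1 x y = cadj (U1 1 x) ** U1 1 y"
  by (simp add: U1_def cadj_kron3 cadj_emat kron3_mult emat_mult lk_def)
lemma U2_hub: "U2 x y = cadj (U2 1 x) ** U2 1 y"
  by (simp add: U2_def cadj_kron3 cadj_emat kron3_mult emat_mult cadj_J1 J1_J1)
lemma U4_alg: "x \<noteq> 0 \<Longrightarrow> y \<noteq> 0 \<Longrightarrow> U4 x y = algel 0 0 0 (emat x y)"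
proof -
  assume xy: "x \<noteq> 0" "y \<noteq> 0"
  have "diag1 0 0 0 = 0" by (rule m4_eqI) (auto simp: m4simps)
  moreover have "diag2 0 (emat x y) = emat x y" using xy by (auto simp: vec_eq_iff diag2_def emat_apply)
  ultimately show ?thesis by (simp add: U4_def algel_def kron3_zero1)
qed

lemma Zt_sq: "smat d (kron3 (emat 1 0) (emat 0 1) (emat 0 0)) ** cadj (smat d (kron3 (emat 1 0) (emat 0 1) (emat 0 0)))
   = smat (d * cnj d) (U1 1 1)"
  by (simp add: mult.commute U1_def lk_def cadj_smat cadj_kron3 cadj_emat smat_mult1 smat_mult2 smat_smat kron3_mult emat_mult)
lemma Zt_sq': "cadj (smat d (kron3 (emat 1 0) (emat 0 1) (emat 0 0))) ** smat d (kron3 (emat 1 0) (emat 0 1) (emat 0 0))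
   = smat (cnj d * d) (kron3 (emat 0 0) (emat 1 1) (emat 0 0))"
  by (simp add: mult.commute cadj_smat cadj_kron3 cadj_emat smat_mult1 smat_mult2 smat_smat kron3_mult emat_mult)

lemma W0_eq: "U1 1 1 ** (kron3 (smat a23 (emat 1 2) + smat a24 (emat 1 3)) (emat 0 0) (emat 0 0)
 + kron3 (smat b23 (emat 1 2) + smat b24 (emat 1 3)) (emat 0 0) J1) = kron3 (smat a23 (emat 1 2) + smat a24 (emat 1 3)) (emat 0 0) (emat 0 0)"
  by (simp add: U1_def lk_def ksimps E00_J1)

lemma W1_eq: "U2 1 1 ** (kron3 (smat a23 (emat 1 2) + smat a24 (emat 1 3)) (emat 0 0) (emat 0 0)
 + kron3 (smat b23 (emat 1 2) + smat b24 (emat 1 3)) (emat 0 0) J1) = kron3 (smat b23 (emat 1 2) + smat b24 (emat 1 3)) (emat 0 0) J1"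
  by (simp add: U2_def ksimps J1_E00 J1_J1)

lemma hub_x2: "kron3 (smat a (emat r 2) + smat b (emat r 3)) (emat 0 0) Z ** (smat (cnj a) (Cm 2 2) + smat (cnj b) (Cm 3 2))
   = smat (cnj a * a + cnj b * b) (kron3 (emat r 2) (emat 0 0) Z)"
  by (simp add: Cm_def Kop_def ksimps smat_smat smat_comb mult.commute)
lemma hub_x3: "kron3 (smat a (emat r 2) + smat b (emat r 3)) (emat 0 0) Z ** (smat (cnj a) (Cm 2 3) + smat (cnj b) (Cm 3 3))
   = smat (cnj a * a + cnj b * b) (kron3 (emat r 3) (emat 0 0) Z)"
  by (simp add: Cm_def Kop_def ksimps smat_smat smat_comb mult.commute)

lemma U2_11: "Pb - U1 1 1 = U2 1 1"
  by (simp add: Pb_def Kop_def U1_def U2_def lk_def J1_def kron3_diff3 kron3_zero1)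
lemma U3_eq: "Pa - kron3 (emat 0 0) (emat 1 1) (emat 0 0) - U2 0 0 = U3"
  by (simp add: Pa_def Kop_def U3_def U2_def J1_def kron3_diff3 algebra_simps)
lemma U2_10: "U2 1 0 = U2 1 2 ** cadj (U2 0 2)"
  by (simp add: U2_def cadj_kron3 cadj_emat kron3_mult emat_mult cadj_J1 J1_J1)

lemma sum123: "sum f {1,2,3::4} = f 1 + f 2 + f 3"
  by (simp add: add.assoc)

lemma decompG:
  assumes "M \<in> blk blG psG cpG"
  shows "M = (\<Sum>x\<in>UNIV. \<Sum>y\<in>UNIV. smat (M $ (lk x, x, 0) $ (lk y, y, 0)) (U1 x y))
     + (\<Sum>x\<in>UNIV. \<Sum>y\<in>UNIV. smat (M $ (0, x, 1) $ (0, y, 1)) (U2 x y))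
     + smat (M $ (0,0,0) $ (0,0,0)) U3
     + (\<Sum>x\<in>{1,2,3}. \<Sum>y\<in>{1,2,3}. smat (M $ (1, x, 0) $ (1, y, 0)) (U4 x y))"
proof -
  obtain F where F: "\<And>p q. M $ p $ q = (if blG p = blG q \<and> cpG p = cpG q then F (blG p) (psG p) (psG q) else 0)"
    using assms by (rule blkE) blast
  show ?thesis
    apply (rule op_enumI, rule all_idx2_I, elim insertE emptyE)
    apply (simp_all only: F sum4 sum123 U1_def U2_def U3_def U4_def lk_def fastsimps msimps G_defs)
    done
qed


lemma nz: assumes "(a, b) \<noteq> (0::complex, 0)" shows "cnj a * a + cnj b * b \<noteq> 0"
proof
  assume h: "cnj a * a + cnj b * b = 0"
  have 1: "cnj a * a = complex_of_real ((cmod a)\<^sup>2)"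
    by (rule trans[OF mult.commute complex_norm_square[symmetric]])
  have 2: "cnj b * b = complex_of_real ((cmod b)\<^sup>2)"
    by (rule trans[OF mult.commute complex_norm_square[symmetric]])
  have eq: "cnj a * a + cnj b * b = complex_of_real ((cmod a)\<^sup>2 + (cmod b)\<^sup>2)"
    unfolding 1 2 of_real_add ..
  have "complex_of_real ((cmod a)\<^sup>2 + (cmod b)\<^sup>2) = 0" using h by (simp only: eq)
  then have "(cmod a)\<^sup>2 + (cmod b)\<^sup>2 = 0" by (simp only: of_real_eq_0_iff)
  then have "(cmod a)\<^sup>2 = 0" "(cmod b)\<^sup>2 = 0" by (simp_all add: add_nonneg_eq_0_iff)
  then show False using assms by simp
qed

lemma comm_eq_algel: "comm (Dirac Xa Xb Y u) (algel l z w m) = comm (D0 Xa Xb Y) (algel l z w m)"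
  by (simp only: comm_def comm_Dirac)
lemma ClD_commA: "comm D (algel l z w m) \<in> ClD D"
  unfolding comm_def by (rule ClD_comm[OF algel_in])
lemma ClD_commA': "comm (D0 Xa Xb Y) (algel l z w m) \<in> ClD (Dirac Xa Xb Y u)"
  using ClD_commA[of "Dirac Xa Xb Y u" l z w m] by (simp only: comm_eq_algel)

lemma psG_sw: "psG \<circ> sw = cpG"
proof -
  have "\<forall>p. psG (sw p) = cpG p"
    by (rule all_idx_I, elim insertE emptyE, simp_all only: fastsimps G_defs sw_def)
  then show ?thesis by (simp add: fun_eq_iff)
qed
lemma cpG_sw: "cpG \<circ> sw = psG"
proof -
  have "\<forall>p. cpG (sw p) = psG p"
    by (rule all_idx_I, elim insertE emptyE, simp_all only: fastsimps G_defs sw_def)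
  then show ?thesis by (simp add: fun_eq_iff)
qed
lemma blG_sw: "(blG \<circ> sw) p = (blG \<circ> sw) q \<longleftrightarrow> blG p = blG q"
proof -
  have "\<forall>p q. blG (sw p) = blG (sw q) \<longleftrightarrow> blG p = blG q"
    by (rule all_idx2_I, elim insertE emptyE, simp_all only: fastsimps G_defs sw_def)
  then show ?thesis unfolding comp_def by blast
qed

lemma hodge_of_eq:
  assumes "ClD D = blk blG psG cpG"
  shows "hodge D"
proof -
  have "commutant (ClD D) = blk blG cpG psG" unfolding assms by (rule commutant_blk[OF regG])
  moreover have "opp ` ClD D = blk blG cpG psG"
    unfolding assms opp_image_blk psG_sw cpG_sw by (rule blk_relabel) (rule blG_sw)
  ultimately show ?thesis unfolding hodge_def by simp
qed

context
  fixes a23 a24 b13 b14 b23 b24 d21 u :: complex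
  assumes hd: "d21 \<noteq> 0" and ha: "(a23, a24) \<noteq> (0, 0)"
    and hb1: "(b13, b14) \<noteq> (0, 0)" and hb2: "(b23, b24) \<noteq> (0, 0)"
begin

abbreviation "DD \<equiv> Dirac (Xmat 0 0 a23 a24) (Xmat b13 b14 b23 b24) (Ymat 0 0 0 d21 0 0 0) u"
abbreviation "CC \<equiv> ClD DD"

lemma smat_inv: "c \<noteq> 0 \<Longrightarrow> smat (1/c) (smat c X) = X"
  by (simp add: smat_smat smat_one)

lemma Pa_C: "Pa \<in> CC" unfolding Pa_alg by (intro ClD_smat ClD_add ClD_A algel_in)
lemma Pb_C: "Pb \<in> CC" unfolding Pb_alg by (intro ClD_smat ClD_add ClD_A algel_in)
lemma Cm_C: "Cm 2 2 \<in> CC" "Cm 3 3 \<in> CC" "Cm 2 3 \<in> CC" "Cm 3 2 \<in> CC"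
  unfolding C22_alg C33_alg C23_alg C32_alg by (intro ClD_smat ClD_add ClD_A algel_in)+

lemma commPa: "comm DD Pa \<in> CC" "comm DD Pa = comm (D0s a23 a24 b13 b14 b23 b24 d21) Pa"
  unfolding Pa_alg comm_smat comm_add comm_eq_algel
  by (intro ClD_smat ClD_add ClD_commA') (rule refl)
lemma commPc: "comm DD (Cm 2 2 + Cm 3 3) \<in> CC" "comm DD (Cm 2 2 + Cm 3 3) = comm (D0s a23 a24 b13 b14 b23 b24 d21) (Cm 2 2 + Cm 3 3)"
  unfolding C22_alg C33_alg comm_smat comm_add comm_eq_algel
  by (intro ClD_smat ClD_add ClD_commA') (rule refl)

lemma Zt_C: "smat d21 (kron3 (emat 1 0) (emat 0 1) (emat 0 0)) \<in> CC"
proof -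
  have "Pb ** comm DD Pa \<in> CC" by (intro ClD_mult Pb_C commPa(1))
  then show ?thesis by (simp only: commPa(2) Zt_eq)
qed
lemma Wt_C: "kron3 (smat a23 (emat 1 2) + smat a24 (emat 1 3)) (emat 0 0) (emat 0 0)
 + kron3 (smat b23 (emat 1 2) + smat b24 (emat 1 3)) (emat 0 0) J1 \<in> CC"
proof -
  have "Pb ** comm DD (Cm 2 2 + Cm 3 3) \<in> CC" by (intro ClD_mult Pb_C commPc(1))
  then show ?thesis by (simp only: commPc(2) Wt_eq)
qed
lemma Vt_C: "kron3 (smat b13 (emat 0 2) + smat b14 (emat 0 3)) (emat 0 0) J1 \<in> CC"
proof -
  have "Pa ** comm DD (Cm 2 2 + Cm 3 3) \<in> CC" by (intro ClD_mult Pa_C commPc(1))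
  then show ?thesis by (simp only: commPc(2) Vt_eq)
qed

lemma U1_10_C: "U1 1 0 \<in> CC"
proof -
  have "U1 1 0 = smat (1/d21) (smat d21 (kron3 (emat 1 0) (emat 0 1) (emat 0 0)))"
    using hd by (simp add: smat_inv U1_def lk_def)
  then show ?thesis using Zt_C by (simp add: ClD_smat)
qed
lemma U1_11_C: "U1 1 1 \<in> CC"
proof -
  have "d21 * cnj d21 \<noteq> 0" using hd by simp
  then have "U1 1 1 = smat (1/(d21 * cnj d21)) (smat d21 (kron3 (emat 1 0) (emat 0 1) (emat 0 0)) ** cadj (smat d21 (kron3 (emat 1 0) (emat 0 1) (emat 0 0))))"
    by (simp add: Zt_sq smat_inv)
  then show ?thesis using Zt_C by (simp add: ClD_smat ClD_mult ClD_adj)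
qed
lemma Qa_C: "kron3 (emat 0 0) (emat 1 1) (emat 0 0) \<in> CC"
proof -
  have "cnj d21 * d21 \<noteq> 0" using hd by simp
  then have "kron3 (emat 0 0) (emat 1 1) (emat 0 0) = smat (1/(cnj d21 * d21)) (cadj (smat d21 (kron3 (emat 1 0) (emat 0 1) (emat 0 0))) ** smat d21 (kron3 (emat 1 0) (emat 0 1) (emat 0 0)))"
    by (simp add: Zt_sq' smat_inv)
  then show ?thesis using Zt_C by (simp add: ClD_smat ClD_mult ClD_adj)
qed

lemma W0_C: "kron3 (smat a23 (emat 1 2) + smat a24 (emat 1 3)) (emat 0 0) (emat 0 0) \<in> CC"
proof -
  have "U1 1 1 ** (kron3 (smat a23 (emat 1 2) + smat a24 (emat 1 3)) (emat 0 0) (emat 0 0)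
 + kron3 (smat b23 (emat 1 2) + smat b24 (emat 1 3)) (emat 0 0) J1) \<in> CC" by (intro ClD_mult U1_11_C Wt_C)
  then show ?thesis by (simp only: W0_eq)
qed
lemma U2_11_C: "U2 1 1 \<in> CC"
  unfolding U2_11[symmetric] by (intro ClD_diff Pb_C U1_11_C)
lemma W1_C: "kron3 (smat b23 (emat 1 2) + smat b24 (emat 1 3)) (emat 0 0) J1 \<in> CC"
proof -
  have "U2 1 1 ** (kron3 (smat a23 (emat 1 2) + smat a24 (emat 1 3)) (emat 0 0) (emat 0 0)
 + kron3 (smat b23 (emat 1 2) + smat b24 (emat 1 3)) (emat 0 0) J1) \<in> CC" by (intro ClD_mult U2_11_C Wt_C)
  then show ?thesis by (simp only: W1_eq)
qed

lemma hubC: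
  assumes W: "kron3 (smat a (emat r 2) + smat b (emat r 3)) (emat 0 0) Z \<in> CC" and nab: "(a, b) \<noteq> (0, 0)"
  shows "kron3 (emat r 2) (emat 0 0) Z \<in> CC" "kron3 (emat r 3) (emat 0 0) Z \<in> CC"
proof -
  have n: "cnj a * a + cnj b * b \<noteq> 0" by (rule nz[OF nab])
  have "kron3 (emat r 2) (emat 0 0) Z = smat (1/(cnj a * a + cnj b * b)) (kron3 (smat a (emat r 2) + smat b (emat r 3)) (emat 0 0) Z ** (smat (cnj a) (Cm 2 2) + smat (cnj b) (Cm 3 2)))"
    using n by (simp add: hub_x2 smat_inv)
  then show "kron3 (emat r 2) (emat 0 0) Z \<in> CC" using W Cm_C by (simp add: ClD_smat ClD_mult ClD_add)
  have "kron3 (emat r 3) (emat 0 0) Z = smat (1/(cnj a * a + cnj b * b)) (kron3 (smat a (emat r 2) + smat b (emat r 3)) (emat 0 0) Z ** (smat (cnj a) (Cm 2 3) + smat (cnj b) (Cm 3 3)))"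
    using n by (simp add: hub_x3 smat_inv)
  then show "kron3 (emat r 3) (emat 0 0) Z \<in> CC" using W Cm_C by (simp add: ClD_smat ClD_mult ClD_add)
qed

lemma U1_1x_C: "U1 1 x \<in> CC"
proof -
  have "U1 1 2 = kron3 (emat 1 2) (emat 0 0) (emat 0 0)" "U1 1 3 = kron3 (emat 1 3) (emat 0 0) (emat 0 0)"
    by (simp_all add: U1_def lk_def)
  then have "U1 1 2 \<in> CC" "U1 1 3 \<in> CC" using hubC[OF W0_C ha] by simp_all
  moreover have "x \<in> {0,1,2,3}" using UNIV_I[of x] unfolding UNIV4 .
  ultimately show ?thesis using U1_10_C U1_11_C by auto
qed
lemma U1_C: "U1 x y \<in> CC"
  unfolding U1_hub[of x y] by (intro ClD_mult ClD_adj U1_1x_C)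

lemma U2_12_C: "U2 1 2 \<in> CC" "U2 1 3 \<in> CC"
  unfolding U2_def using hubC[OF W1_C hb2] by simp_all
lemma U2_02_C: "U2 0 2 \<in> CC" "U2 0 3 \<in> CC"
  unfolding U2_def using hubC[OF Vt_C hb1] by simp_all
lemma U2_10_C: "U2 1 0 \<in> CC"
  unfolding U2_10 by (intro ClD_mult ClD_adj U2_12_C U2_02_C)
lemma U2_1x_C: "U2 1 x \<in> CC"
proof -
  have "x \<in> {0,1,2,3}" using UNIV_I[of x] unfolding UNIV4 .
  then show ?thesis using U2_10_C U2_11_C U2_12_C by auto
qed
lemma U2_C: "U2 x y \<in> CC"
  unfolding U2_hub[of x y] by (intro ClD_mult ClD_adj U2_1x_C)
lemma U3_C: "U3 \<in> CC"
  unfolding U3_eq[symmetric] by (intro ClD_diff Pa_C Qa_C U2_C)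
lemma U4_C: "x \<in> {1,2,3} \<Longrightarrow> y \<in> {1,2,3} \<Longrightarrow> U4 x y \<in> CC"
  by (subst U4_alg) (auto intro: ClD_A algel_in)

lemma S_sub_C: "blk blG psG cpG \<subseteq> CC"
proof
  fix M assume M: "M \<in> blk blG psG cpG"
  show "M \<in> CC"
    by (subst decompG[OF M]) (intro ClD_add ClD_sum ClD_smat U1_C U2_C U3_C U4_C finite; assumption)
qed

lemma hodge_generic: "hodge DD"
  by (rule hodge_of_eq) (use ClD_G S_sub_C in blast)

end


theorem theorem17:
  fixes a13 a14 a23 a24 b13 b14 b23 b24 :: complex
    and d12 d13 d14 d21 d22 d23 d24 :: complex
    and Ups :: complex
  assumes "a13 = 0" and "a14 = 0"
    and "d12 = 0" and "d13 = 0" and "d14 = 0"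
    and "d22 = 0" and "d23 = 0" and "d24 = 0"
  shows "hodge (Dirac (Xmat a13 a14 a23 a24) (Xmat b13 b14 b23 b24)
                       (Ymat d12 d13 d14 d21 d22 d23 d24) Ups)
     \<longleftrightarrow> d21 \<noteq> 0 \<and> (a23, a24) \<noteq> (0, 0) \<and> (b13, b14) \<noteq> (0, 0) \<and> (b23, b24) \<noteq> (0, 0)"
proof -
  let ?H = "hodge (Dirac (Xmat 0 0 a23 a24) (Xmat b13 b14 b23 b24) (Ymat 0 0 0 d21 0 0 0) Ups)"
  have "?H \<longleftrightarrow> d21 \<noteq> 0 \<and> (a23, a24) \<noteq> (0, 0) \<and> (b13, b14) \<noteq> (0, 0) \<and> (b23, b24) \<noteq> (0, 0)"
  proof
    assume h: ?H
    show "d21 \<noteq> 0 \<and> (a23, a24) \<noteq> (0, 0) \<and> (b13, b14) \<noteq> (0, 0) \<and> (b23, b24) \<noteq> (0, 0)"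
    proof (intro conjI notI)
      assume "d21 = 0"
      then show False using h nh_D[of a23 a24 b13 b14 b23 b24 Ups] by simp
    next
      assume "(a23, a24) = (0, 0)"
      then show False using h nh_A[of b13 b14 b23 b24 d21 Ups] by simp
    next
      assume "(b13, b14) = (0, 0)"
      then show False using h nh_B1[of a23 a24 b23 b24 d21 Ups] by simp
    next
      assume "(b23, b24) = (0, 0)"
      then show False using h nh_B2[of a23 a24 b13 b14 d21 Ups] by simp
    qed
  next
    assume "d21 \<noteq> 0 \<and> (a23, a24) \<noteq> (0, 0) \<and> (b13, b14) \<noteq> (0, 0) \<and> (b23, b24) \<noteq> (0, 0)"
    then show ?H using hodge_generic by blast
  qed
  then show ?thesis using assms by simp
qed


end
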